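(* For integers $b\ge0$ and $n\ge1$, let $ss_b(n)$ be the number of multiplex siteswaps of length $n$ using exactly $b$ balls. Then \[ ss_b(n)=\operatorname{trace}(A_b^n)-\sum_{i=0}^{b-1}\operatorname{trace}(A_i^n). \]
   Context: For an integer $b\ge 0$, an ordered partition of $b$ is a finite sequence $(q_1,\ldots,q_k)$ of positive integers summing to $b$ (for $b=0$ the only one is the empty sequence). An ordered partition $(q_1,\ldots,q_k)$ with $k\ge1$ is nontrivially embedded into an ordered partition $(r_1,\ldots,r_\ell)$ by a choice of indices $1\le i_2<\cdots<i_k\le \ell$ with $q_j\le r_{i_j}$ for $2\le j\le k$; different index tuples count as different embeddings. A card for $b$ balls is either (i) a trivial card, given by an ordered partition $q$ of $b$, with left and right partitions both $q$; or (ii) a throw card, given by ordered partitions $q$ ($k\ge1$ parts) and $r$ of $b$ together with a nontrivial embedding of $q$ into $r$, with left partition $q$ and right partition $r$. Different index tuples give different cards, and a throw card is distinct from the trivial card even when $q=r$. $A_b$ is the square matrix with rows and columns indexed by the ordered partitions of $b$ whose $(u,v)$ entry is the number of cards for $b$ balls with left partition $u$ and right partition $v$ (e.g. $A_0=(1)$, $A_1=(2)$). A multiplex siteswap of length $n$ is a sequence $(M_0,\ldots,M_{n-1})$, indexed by $t\in\mathbb{Z}/n\mathbb{Z}$, of finite multisets of positive integers ($M_t$ is the multiset of throw heights at beat $t$; empty means no throw) such that for every $t$, $|M_t|$ equals the number of pairs $(s,h)$ with $h$ an element of $M_s$ (counted with multiplicity) and $s+h\equiv t \pmod n$. Its number of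 balls is $\frac1n\sum_t\sum_{h\in M_t}h$. Sequences differing by a rotation are counted as different. *)

theory Defs
  imports "Jordan_Normal_Form.Matrix" "HOL-Library.Multiset"
begin

definition ord_parts :: "nat \<Rightarrow> nat list set" where
  "ord_parts b = {q. (\<forall>x\<in>set q. 0 < x) \<and> sum_list q = b}"

text \<open>Nontrivial embeddings of q = (q_1..q_k), k >= 1, into r = (r_1..r_l):
  index tuples (i_2,...,i_k) with 1 <= i_2 < ... < i_k <= l and q_j <= r_(i_j).
  Entry is!j of the list represents i_(j+2) (1-based), so q_(j+2) = q!(j+1),
  r_(i) = r!(i-1).\<close>
definition embeddings :: "nat list \<Rightarrow> nat list \<Rightarrow> nat list set" where
  "embeddings q r = (if q = [] then {} else
     {is. length is = length q - 1 \<and> sorted_wrt (<) is \<and>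
          (\<forall>j<length is. 1 \<le> is!j \<and> is!j \<le> length r \<and> q!(j+1) \<le> r!(is!j - 1))})"

datatype card = Trivial "nat list" | Throw "nat list" "nat list" "nat list"

fun left_part :: "card \<Rightarrow> nat list" where
  "left_part (Trivial q) = q"
| "left_part (Throw q r is) = q"

fun right_part :: "card \<Rightarrow> nat list" where
  "right_part (Trivial q) = q"
| "right_part (Throw q r is) = r"

definition cards :: "nat \<Rightarrow> card set" where
  "cards b = Trivial ` ord_parts b \<union>
     {Throw q r is | q r is. q \<in> ord_parts b \<and> r \<in> ord_parts b \<and> q \<noteq> [] \<and> is \<in> embeddings q r}"

text \<open>A fixed (arbitrary) enumeration of the ordered partitions of b, used to index
  rows and columns of A_b; the trace of powers does not depend on this choice.\<close>
definition parts_enum :: "nat \<Rightarrow> nat list list" where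
  "parts_enum b = (SOME xs. distinct xs \<and> set xs = ord_parts b)"

definition A_mat :: "nat \<Rightarrow> int mat" where
  "A_mat b = (let P = parts_enum b in
     mat (length P) (length P)
       (\<lambda>(i, j). int (card {c \<in> cards b. left_part c = P!i \<and> right_part c = P!j})))"

text \<open>Multiplex siteswaps of length n, represented as functions t \<mapsto> M_t for t < n
  (and M_t = {#} for t >= n, to make the representation canonical).\<close>
definition multiplex_siteswaps :: "nat \<Rightarrow> (nat \<Rightarrow> nat multiset) set" where
  "multiplex_siteswaps n = {M. (\<forall>t\<ge>n. M t = {#}) \<and> (\<forall>t<n. \<forall>h\<in>#M t. 0 < h) \<and>
     (\<forall>t<n. size (M t) = (\<Sum>s<n. size (filter_mset (\<lambda>h. (s + h) mod n = t) (M s))))}"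

definition num_balls :: "nat \<Rightarrow> (nat \<Rightarrow> nat multiset) \<Rightarrow> real" where
  "num_balls n M = real (\<Sum>t<n. sum_mset (M t)) / real n"

definition mat_trace :: "'a::comm_ring_1 mat \<Rightarrow> 'a" where
  "mat_trace A = (\<Sum>i<dim_row A. A $$ (i, i))"

definition ss :: "nat \<Rightarrow> nat \<Rightarrow> nat" where
  "ss b n = card {M \<in> multiplex_siteswaps n. num_balls n M = real b}"

end

theory Submission
  imports Defs
begin

definition C :: "nat \<Rightarrow> nat" where "C j = (if j = 0 then 1 else 2 ^ (j - 1))"

lemma sum_C: "(\<Sum>j\<le>k. C j) = 2 ^ k"
proof (induction k)
  case 0 then show ?case by (simp add: C_def)
next
  case (Suc k)
  have "(\<Sum>j\<le>Suc k. C j) = (\<Sum>j\<le>k. C j) + C (Suc k)" by simp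
  also have "\<dots> = 2 ^ k + 2 ^ k" using Suc by (simp add: C_def)
  finally show ?case by simp
qed

lemma sum_C_less: "m \<ge> 1 \<Longrightarrow> (\<Sum>j<m. C j) = C m"
  using sum_C[of "m - 1"] by (cases m) (auto simp: C_def lessThan_Suc_atMost)

lemma ord_parts_0: "ord_parts 0 = {[]}"
  unfolding ord_parts_def by (auto simp: sum_list_eq_0_iff) (metis all_not_in_conv less_irrefl set_empty)

lemma ord_parts_Suc:
  "ord_parts (Suc m) = (\<Union>f\<in>{1..Suc m}. (Cons f) ` ord_parts (Suc m - f))"
proof (intro equalityI subsetI)
  fix q assume q: "q \<in> ord_parts (Suc m)"
  then obtain f r where "q = f # r" unfolding ord_parts_def by (cases q) auto
  with q have "f \<in> {1..Suc m}" "r \<in> ord_parts (Suc m - f)"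
    unfolding ord_parts_def by auto
  with \<open>q = f # r\<close> show "q \<in> (\<Union>f\<in>{1..Suc m}. (Cons f) ` ord_parts (Suc m - f))"
    by blast
next
  fix q assume "q \<in> (\<Union>f\<in>{1..Suc m}. (Cons f) ` ord_parts (Suc m - f))"
  then show "q \<in> ord_parts (Suc m)" unfolding ord_parts_def by auto
qed

lemma ord_parts_finite_card:
  "finite (ord_parts m) \<and> card (ord_parts m) = C m"
proof (induction m rule: less_induct)
  case (less m)
  show ?case
  proof (cases m)
    case 0 then show ?thesis by (simp add: ord_parts_0 C_def)
  next
    case (Suc k)
    have fin: "\<And>f. f \<in> {1..Suc k} \<Longrightarrow> finite (ord_parts (Suc k - f))"
      using less Suc by auto
    have disj: "\<And>f g. f \<in> {1..Suc k} \<Longrightarrow> g \<in> {1..Suc k} \<Longrightarrow> f \<noteq> g \<Longrightarrow>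
        (Cons f) ` ord_parts (Suc k - f) \<inter> (Cons g) ` ord_parts (Suc k - g) = {}" by auto
    have "card (ord_parts (Suc k)) = (\<Sum>f\<in>{1..Suc k}. card ((Cons f) ` ord_parts (Suc k - f)))"
      unfolding ord_parts_Suc by (rule card_UN_disjoint) (use fin disj in auto)
    also have "\<dots> = (\<Sum>f\<in>{1..Suc k}. card (ord_parts (Suc k - f)))"
      by (intro sum.cong refl card_image) auto
    also have "\<dots> = (\<Sum>f\<in>{1..Suc k}. C (Suc k - f))"
      by (intro sum.cong refl) (use less Suc in auto)
    also have "\<dots> = (\<Sum>j\<le>k. C j)"
      by (rule sum.reindex_bij_witness[where i="\<lambda>j. Suc k - j" and j="\<lambda>f. Suc k - f"]) auto
    also have "\<dots> = C (Suc k)" by (simp only: sum_C) (simp add: C_def)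
    finally show ?thesis using Suc fin by (auto simp: ord_parts_Suc)
  qed
qed

lemma finite_ord_parts: "finite (ord_parts m)"
  using ord_parts_finite_card by blast

lemma ord_parts_le: "q \<in> ord_parts m \<Longrightarrow> x \<in> set q \<Longrightarrow> x \<le> m"
  unfolding ord_parts_def using member_le_sum_list by blast

lemma ord_parts_length: "q \<in> ord_parts m \<Longrightarrow> length q \<le> m"
proof -
  assume q: "q \<in> ord_parts m"
  have "length q = (\<Sum>x\<leftarrow>q. 1)" by (simp add: sum_list_triv)
  also have "\<dots> \<le> (\<Sum>x\<leftarrow>q. x)"
    by (rule sum_list_mono) (use q in \<open>auto simp: ord_parts_def\<close>)
  finally show ?thesis using q unfolding ord_parts_def by simp
qed

lemma finite_embeddings: "finite (embeddings q r)"
proof -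
  have "embeddings q r \<subseteq> {is. set is \<subseteq> {..length r} \<and> length is = length q - 1}"
    unfolding embeddings_def by (auto simp: in_set_conv_nth)
  moreover have "finite {is. set is \<subseteq> {..length r} \<and> length is = length q - 1}"
    by (rule finite_lists_length_eq) simp
  ultimately show ?thesis by (rule finite_subset)
qed

lemma finite_cards: "finite (cards b)"
proof -
  have "cards b \<subseteq> Trivial ` ord_parts b \<union>
     (\<Union>q\<in>ord_parts b. \<Union>r\<in>ord_parts b. (Throw q r) ` embeddings q r)"
    unfolding cards_def by auto
  moreover have "finite (Trivial ` ord_parts b \<union>
     (\<Union>q\<in>ord_parts b. \<Union>r\<in>ord_parts b. (Throw q r) ` embeddings q r))"
    using finite_ord_parts finite_embeddings by auto
  ultimately show ?thesis by (rule finite_subset)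
qed

lemma cards_parts: "c \<in> cards b \<Longrightarrow> left_part c \<in> ord_parts b \<and> right_part c \<in> ord_parts b"
  unfolding cards_def by auto

fun chainw :: "nat list \<Rightarrow> card list \<Rightarrow> nat list \<Rightarrow> bool" where
  "chainw u [] v = (u = v)"
| "chainw u (c # cs) v = (left_part c = u \<and> chainw (right_part c) cs v)"

lemma chainw_snoc: "chainw u (cs @ [c]) v \<longleftrightarrow> chainw u cs (left_part c) \<and> right_part c = v"
  by (induction cs arbitrary: u) auto

definition W :: "nat \<Rightarrow> nat \<Rightarrow> nat list \<Rightarrow> nat list \<Rightarrow> card list set" where
  "W b k u v = {cs. length cs = k \<and> set cs \<subseteq> cards b \<and> chainw u cs v}"

lemma finite_W: "finite (W b k u v)"
proof -
  have "W b k u v \<subseteq> {cs. set cs \<subseteq> cards b \<and> length cs = k}" unfolding W_def by auto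
  moreover have "finite {cs. set cs \<subseteq> cards b \<and> length cs = k}"
    by (rule finite_lists_length_eq) (rule finite_cards)
  ultimately show ?thesis by (rule finite_subset)
qed

lemma W_0: "W b 0 u v = (if u = v then {[]} else {})"
  unfolding W_def by auto

lemma W_Suc: "W b (Suc k) u v =
   (\<Union>c\<in>{c\<in>cards b. right_part c = v}. (\<lambda>cs. cs @ [c]) ` W b k u (left_part c))"
proof (intro equalityI subsetI)
  fix xs assume xs: "xs \<in> W b (Suc k) u v"
  have "xs \<noteq> []" using xs by (auto simp: W_def)
  then obtain cs c where e: "xs = cs @ [c]" using rev_exhaust by blast
  with xs have "c \<in> cards b" "right_part c = v" "cs \<in> W b k u (left_part c)"
    unfolding W_def by (auto simp: chainw_snoc)
  with e show "xs \<in> (\<Union>c\<in>{c\<in>cards b. right_part c = v}. (\<lambda>cs. cs @ [c]) ` W b k u (left_part c))"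
    by blast
next
  fix xs assume "xs \<in> (\<Union>c\<in>{c\<in>cards b. right_part c = v}. (\<lambda>cs. cs @ [c]) ` W b k u (left_part c))"
  then obtain c cs where "c \<in> cards b" "right_part c = v" "cs \<in> W b k u (left_part c)" "xs = cs @ [c]"
    by blast
  then show "xs \<in> W b (Suc k) u v" unfolding W_def by (simp add: chainw_snoc)
qed

lemma card_W_Suc: "card (W b (Suc k) u v) =
   (\<Sum>x\<in>ord_parts b. card (W b k u x) * card {c\<in>cards b. left_part c = x \<and> right_part c = v})"
proof -
  let ?Cv = "{c\<in>cards b. right_part c = v}"
  have "card (W b (Suc k) u v) = (\<Sum>c\<in>?Cv. card ((\<lambda>cs. cs @ [c]) ` W b k u (left_part c)))"
    unfolding W_Suc
  proof (rule card_UN_disjoint)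
    show "finite ?Cv" using finite_cards by simp
    show "\<forall>c\<in>?Cv. finite ((\<lambda>cs. cs @ [c]) ` W b k u (left_part c))" using finite_W by blast
    show "\<forall>c\<in>?Cv. \<forall>c'\<in>?Cv. c \<noteq> c' \<longrightarrow>
      (\<lambda>cs. cs @ [c]) ` W b k u (left_part c) \<inter> (\<lambda>cs. cs @ [c']) ` W b k u (left_part c') = {}"
    proof (intro ballI impI)
      fix c c' :: card assume "c \<noteq> c'"
      then show "(\<lambda>cs. cs @ [c]) ` W b k u (left_part c) \<inter> (\<lambda>cs. cs @ [c']) ` W b k u (left_part c') = {}"
        by (auto dest: arg_cong[where f=last])
    qed
  qed
  also have "\<dots> = (\<Sum>c\<in>?Cv. card (W b k u (left_part c)))"
    by (intro sum.cong refl card_image) (auto simp: inj_on_def)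
  also have "\<dots> = (\<Sum>x\<in>ord_parts b. \<Sum>c\<in>{c\<in>?Cv. left_part c = x}. card (W b k u (left_part c)))"
    by (rule sum.group[symmetric]) (auto simp: finite_cards finite_ord_parts cards_parts)
  also have "\<dots> = (\<Sum>x\<in>ord_parts b. card (W b k u x) * card {c\<in>cards b. left_part c = x \<and> right_part c = v})"
  proof (intro sum.cong refl)
    fix x
    have "(\<Sum>c\<in>{c\<in>?Cv. left_part c = x}. card (W b k u (left_part c))) =
          (\<Sum>c\<in>{c\<in>?Cv. left_part c = x}. card (W b k u x))" by (intro sum.cong) auto
    also have "\<dots> = card (W b k u x) * card {c\<in>cards b. left_part c = x \<and> right_part c = v}"
    proof -
      have e: "{c\<in>?Cv. left_part c = x} = {c\<in>cards b. left_part c = x \<and> right_part c = v}" by auto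
      show ?thesis unfolding e sum_constant by simp
    qed
    finally show "(\<Sum>c\<in>{c\<in>?Cv. left_part c = x}. card (W b k u (left_part c))) =
        card (W b k u x) * card {c\<in>cards b. left_part c = x \<and> right_part c = v}" .
  qed
  finally show ?thesis .
qed

lemma parts_enum: "distinct (parts_enum b) \<and> set (parts_enum b) = ord_parts b"
  unfolding parts_enum_def
  by (rule someI_ex) (use finite_distinct_list[OF finite_ord_parts] in metis)

lemma sum_parts_enum: "(\<Sum>l<length (parts_enum b). f (parts_enum b ! l)) = (\<Sum>x\<in>ord_parts b. f x)"
proof -
  have "(\<Sum>x\<in>ord_parts b. f x) = (\<Sum>x\<in>set (parts_enum b). f x)" using parts_enum by simp
  also have "\<dots> = sum_list (map f (parts_enum b))" using parts_enum by (simp add: sum_list_distinct_conv_sum_set)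
  also have "\<dots> = (\<Sum>l<length (parts_enum b). f (parts_enum b ! l))"
    by (simp add: sum_list_sum_nth atLeast0LessThan)
  finally show ?thesis by simp
qed

lemma A_mat_carrier: "A_mat b \<in> carrier_mat (length (parts_enum b)) (length (parts_enum b))"
  unfolding A_mat_def Let_def by simp

lemma A_mat_index: "i < length (parts_enum b) \<Longrightarrow> j < length (parts_enum b) \<Longrightarrow>
  A_mat b $$ (i, j) = int (card {c \<in> cards b. left_part c = parts_enum b ! i \<and> right_part c = parts_enum b ! j})"
  unfolding A_mat_def Let_def by simp

lemma pow_index: "i < length (parts_enum b) \<Longrightarrow> j < length (parts_enum b) \<Longrightarrow>
  (A_mat b ^\<^sub>m k) $$ (i, j) = int (card (W b k (parts_enum b ! i) (parts_enum b ! j)))"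
proof (induction k arbitrary: j)
  case 0
  have "parts_enum b ! i = parts_enum b ! j \<longleftrightarrow> i = j"
    using parts_enum 0 by (simp add: nth_eq_iff_index_eq)
  then show ?case using 0 A_mat_carrier[of b] by (simp add: W_0)
next
  case (Suc k)
  let ?N = "length (parts_enum b)"
  let ?P = "parts_enum b"
  have c1: "A_mat b ^\<^sub>m k \<in> carrier_mat ?N ?N" using A_mat_carrier by (rule pow_carrier_mat)
  have "(A_mat b ^\<^sub>m Suc k) $$ (i, j) = (\<Sum>l<?N. (A_mat b ^\<^sub>m k) $$ (i, l) * A_mat b $$ (l, j))"
    using Suc.prems c1 A_mat_carrier[of b]
    by (simp add: scalar_prod_def atLeast0LessThan)
  also have "\<dots> = (\<Sum>l<?N. int (card (W b k (?P ! i) (?P ! l)) *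
       card {c \<in> cards b. left_part c = ?P ! l \<and> right_part c = ?P ! j}))"
    by (intro sum.cong refl) (simp add: Suc.IH Suc.prems A_mat_index)
  also have "\<dots> = (\<Sum>x\<in>ord_parts b. int (card (W b k (?P ! i) x) *
       card {c \<in> cards b. left_part c = x \<and> right_part c = ?P ! j}))"
    by (rule sum_parts_enum)
  also have "\<dots> = int (card (W b (Suc k) (?P ! i) (?P ! j)))"
    by (simp add: card_W_Suc)
  finally show ?case .
qed

lemma trace_W: "mat_trace (A_mat b ^\<^sub>m n) = int (\<Sum>u\<in>ord_parts b. card (W b n u u))"
proof -
  have "mat_trace (A_mat b ^\<^sub>m n) = (\<Sum>i<length (parts_enum b). (A_mat b ^\<^sub>m n) $$ (i, i))"
    unfolding mat_trace_def using A_mat_carrier[of b] by simp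
  also have "\<dots> = (\<Sum>i<length (parts_enum b). int (card (W b n (parts_enum b ! i) (parts_enum b ! i))))"
    by (intro sum.cong refl) (simp add: pow_index)
  also have "\<dots> = (\<Sum>u\<in>ord_parts b. int (card (W b n u u)))"
    by (rule sum_parts_enum)
  finally show ?thesis by simp
qed

definition CW :: "nat \<Rightarrow> nat \<Rightarrow> (nat \<Rightarrow> card) set" where
  "CW b n = {w. (\<forall>t. w t \<in> cards b) \<and> (\<forall>t. right_part (w t) = left_part (w (Suc t))) \<and> (\<forall>t. w (t + n) = w t)}"

lemma chainw_nth: "chainw u cs v \<longleftrightarrow> (cs = [] \<and> u = v) \<or>
  (cs \<noteq> [] \<and> left_part (cs!0) = u \<and> right_part (last cs) = v \<and>
   (\<forall>t. Suc t < length cs \<longrightarrow> right_part (cs!t) = left_part (cs!Suc t)))"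
proof (induction cs arbitrary: u)
  case Nil then show ?case by simp
next
  case (Cons c cs)
  show ?case
  proof (cases cs)
    case Nil then show ?thesis by auto
  next
    case (Cons c' cs')
    have ne: "cs \<noteq> []" using Cons by simp
    have eq: "(\<forall>t. Suc t < length (c # cs) \<longrightarrow> right_part ((c # cs)!t) = left_part ((c # cs)!Suc t))
      \<longleftrightarrow> right_part c = left_part (cs!0) \<and> (\<forall>t. Suc t < length cs \<longrightarrow> right_part (cs!t) = left_part (cs!Suc t))"
      (is "?L \<longleftrightarrow> ?R")
    proof
      assume ?L
      moreover have "Suc 0 < length (c # cs)" using Cons by simp
      ultimately have "right_part ((c # cs)!0) = left_part ((c # cs)!Suc 0)" by blast
      then have "right_part c = left_part (cs!0)" by simp
      moreover have "\<forall>t. Suc t < length cs \<longrightarrow> right_part (cs!t) = left_part (cs!Suc t)"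
      proof (intro allI impI)
        fix t assume "Suc t < length cs"
        then have "right_part ((c # cs)!Suc t) = left_part ((c # cs)!Suc (Suc t))"
          using spec[OF \<open>?L\<close>, of "Suc t"] by simp
        then show "right_part (cs!t) = left_part (cs!Suc t)" by simp
      qed
      ultimately show ?R by blast
    next
      assume ?R
      show ?L
      proof (intro allI impI)
        fix t assume "Suc t < length (c # cs)"
        then show "right_part ((c # cs)!t) = left_part ((c # cs)!Suc t)"
          using \<open>?R\<close> by (cases t) auto
      qed
    qed
    show ?thesis unfolding chainw.simps Cons.IH[of "right_part c"] eq using ne
      by (simp add: last_ConsR) (metis (no_types))
  qed
qed

lemma periodic_mod: fixes w :: "nat \<Rightarrow> 'b" and n t :: nat
  shows "(\<forall>t. w (t + n) = w t) \<Longrightarrow> w t = w (t mod n)"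
proof -
  assume p: "\<forall>t. w (t + n) = w t"
  have "w (x + n * k) = w x" for x k
  proof (induction k)
    case 0 show ?case by simp
  next
    case (Suc k)
    have "w (x + n * Suc k) = w ((x + n * k) + n)" by (simp add: algebra_simps)
    also have "\<dots> = w (x + n * k)" using p by blast
    finally show ?case using Suc by simp
  qed
  then show ?thesis by (metis mod_mult_div_eq)
qed

lemma sum_W_CW:
  assumes "n \<ge> 1"
  shows "(\<Sum>u\<in>ord_parts b. card (W b n u u)) = card (CW b n)"
proof -
  let ?U = "\<Union>u\<in>ord_parts b. W b n u u"
  have "(\<Sum>u\<in>ord_parts b. card (W b n u u)) = card ?U"
  proof (rule card_UN_disjoint[symmetric])
    show "finite (ord_parts b)" by (rule finite_ord_parts)
    show "\<forall>u\<in>ord_parts b. finite (W b n u u)" using finite_W by blast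
    show "\<forall>u\<in>ord_parts b. \<forall>u'\<in>ord_parts b. u \<noteq> u' \<longrightarrow> W b n u u \<inter> W b n u' u' = {}"
      using assms by (auto simp: W_def chainw_nth)
  qed
  also have "card ?U = card (CW b n)"
  proof (rule bij_betw_same_card)
    show "bij_betw (\<lambda>cs t. cs ! (t mod n)) ?U (CW b n)"
    proof (rule bij_betw_byWitness[where f'="\<lambda>w. map w [0..<n]"])
      show "\<forall>a\<in>?U. map (\<lambda>t. a ! (t mod n)) [0..<n] = a"
        by (auto simp: W_def intro!: nth_equalityI)
      show "\<forall>w\<in>CW b n. (\<lambda>t. map w [0..<n] ! (t mod n)) = w"
      proof
        fix w assume w: "w \<in> CW b n"
        show "(\<lambda>t. map w [0..<n] ! (t mod n)) = w"
        proof
          fix t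
          have "map w [0..<n] ! (t mod n) = w (t mod n)" using assms by simp
          also have "\<dots> = w t" using w periodic_mod[of w n t] unfolding CW_def by simp
          finally show "map w [0..<n] ! (t mod n) = w t" .
        qed
      qed
      show "(\<lambda>cs t. cs ! (t mod n)) ` ?U \<subseteq> CW b n"
      proof
        fix w assume "w \<in> (\<lambda>cs t. cs ! (t mod n)) ` ?U"
        then obtain u cs where u: "u \<in> ord_parts b" and cs: "cs \<in> W b n u u" and wdef: "w = (\<lambda>t. cs ! (t mod n))"
          by blast
        have len: "length cs = n" and sub: "set cs \<subseteq> cards b" and ch: "chainw u cs u"
          using cs by (auto simp: W_def)
        have ne: "cs \<noteq> []" using len assms by auto
        have c1: "left_part (cs!0) = u" "right_part (last cs) = u"
          and c2: "\<And>t. Suc t < n \<Longrightarrow> right_part (cs!t) = left_part (cs!Suc t)"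
          using ch ne len by (auto simp: chainw_nth)
        have "\<forall>t. w t \<in> cards b"
        proof
          fix t
          have "t mod n < length cs" using len assms by simp
          then have "cs!(t mod n) \<in> set cs" by (rule nth_mem)
          then show "w t \<in> cards b" using sub wdef by auto
        qed
        moreover have "\<forall>t. right_part (w t) = left_part (w (Suc t))"
        proof
          fix t
          show "right_part (w t) = left_part (w (Suc t))"
          proof (cases "Suc (t mod n) < n")
            case True
            then have "Suc t mod n = Suc (t mod n)" by (metis mod_Suc Suc_lessD less_not_refl3)
            then show ?thesis using c2[OF True] wdef by simp
          next
            case False
            have "t mod n < n" using assms by simp
            with False have tm: "t mod n = n - 1" by linarith
            have "Suc t mod n = 0" using tm assms by (simp add: mod_Suc)
            moreover have "last cs = cs ! (n - 1)" using ne len by (simp add: last_conv_nth)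
            ultimately show ?thesis using c1 tm wdef by simp
          qed
        qed
        moreover have "\<forall>t. w (t + n) = w t" using wdef by simp
        ultimately show "w \<in> CW b n" unfolding CW_def by blast
      qed
      show "(\<lambda>w. map w [0..<n]) ` CW b n \<subseteq> ?U"
      proof
        fix cs assume "cs \<in> (\<lambda>w. map w [0..<n]) ` CW b n"
        then obtain w where w: "w \<in> CW b n" and cs: "cs = map w [0..<n]" by blast
        have wc: "\<And>t. w t \<in> cards b" and wr: "\<And>t. right_part (w t) = left_part (w (Suc t))"
          and wp: "\<And>t. w (t + n) = w t" using w unfolding CW_def by auto
        have "left_part (w 0) \<in> ord_parts b" using wc cards_parts by blast
        moreover have "cs \<in> W b n (left_part (w 0)) (left_part (w 0))"
        proof -
          have "last cs = w (n - 1)" using cs assms by (simp add: last_map)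
          then have "right_part (last cs) = left_part (w 0)"
            using wr[of "n - 1"] wp[of 0] assms by simp
          moreover have "cs \<noteq> []" using cs assms by simp
          moreover have "left_part (cs!0) = left_part (w 0)" using cs assms by simp
          moreover have "\<forall>t. Suc t < length cs \<longrightarrow> right_part (cs!t) = left_part (cs!Suc t)"
            using cs wr by auto
          ultimately have "chainw (left_part (w 0)) cs (left_part (w 0))" by (simp add: chainw_nth)
          then show ?thesis using cs wc by (auto simp: W_def)
        qed
        ultimately show "cs \<in> ?U" by blast
      qed
    qed
  qed
  finally show ?thesis .
qed

lemma msum_count:
  fixes f :: "nat \<Rightarrow> nat"
  assumes "set_mset M \<subseteq> {1..K}"
  shows "(\<Sum>x\<in>#M. f x) = (\<Sum>d<K. count M (Suc d) * f (Suc d))"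
  using assms
proof (induction M)
  case empty then show ?case by simp
next
  case (add x M)
  have x: "1 \<le> x" "x \<le> K" using add.prems by auto
  have IH: "(\<Sum>x\<in>#M. f x) = (\<Sum>d<K. count M (Suc d) * f (Suc d))" using add by auto
  have cnt: "count (add_mset x M) (Suc d) = count M (Suc d) + (if d = x - 1 then 1 else 0)" for d
    using x by auto
  have "(\<Sum>d<K. count (add_mset x M) (Suc d) * f (Suc d)) =
        (\<Sum>d<K. count M (Suc d) * f (Suc d) + (if d = x - 1 then f (Suc d) else 0))"
    unfolding cnt by (intro sum.cong refl) (simp add: distrib_right)
  also have "\<dots> = (\<Sum>d<K. count M (Suc d) * f (Suc d)) + f x"
    using x by (simp add: sum.distrib)
  finally show ?case using IH by simp
qed

lemma size_count:
  assumes "set_mset M \<subseteq> {1..K}"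
  shows "size M = (\<Sum>d<K. count M (Suc d))"
  using msum_count[OF assms, of "\<lambda>_. 1"] by simp

lemma summset_count:
  assumes "set_mset M \<subseteq> {1..K}"
  shows "sum_mset M = (\<Sum>d<K. count M (Suc d) * Suc d)"
  using msum_count[OF assms, of "\<lambda>x. x"] by simp

lemma size_filter_count:
  assumes "set_mset M \<subseteq> {1..K}"
  shows "size (filter_mset P M) = (\<Sum>d<K. if P (Suc d) then count M (Suc d) else 0)"
proof -
  have "set_mset (filter_mset P M) \<subseteq> {1..K}" using assms by auto
  from size_count[OF this] show ?thesis by (simp add: if_distrib)
qed

lemma periodic_mult: fixes l :: "nat \<Rightarrow> 'b" and n :: nat
  assumes "\<forall>t. l (t + n) = l t" shows "l (t + n * k) = l t"
proof (induction k)
  case 0 show ?case by simp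
next
  case (Suc k)
  have "l (t + n * Suc k) = l ((t + n * k) + n)" by (simp add: algebra_simps)
  also have "\<dots> = l (t + n * k)" using assms by blast
  finally show ?case using Suc by simp
qed

lemma if_add0: "(if P then (a::nat) + b else 0) = (if P then a else 0) + (if P then b else 0)"
  by simp

definition bnd :: "nat \<Rightarrow> (nat \<Rightarrow> nat \<Rightarrow> nat) \<Rightarrow> bool" where
  "bnd K l \<longleftrightarrow> (\<forall>t d. K \<le> d \<longrightarrow> l t d = 0)"

lemma bndD: "bnd K l \<Longrightarrow> l t K = 0"
  unfolding bnd_def by simp

definition gpre :: "nat \<Rightarrow> (nat \<Rightarrow> nat \<Rightarrow> nat) \<Rightarrow> (nat \<Rightarrow> nat multiset) \<Rightarrow> bool" where
  "gpre n l m \<longleftrightarrow> (\<forall>t d. l (Suc t) d = l t (Suc d) + count (m t) (Suc d)) \<and> (\<forall>t. l (t + n) = l t) \<and>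
     (\<forall>t. 0 \<notin># m t)"

definition gwalk :: "nat \<Rightarrow> (nat \<Rightarrow> nat \<Rightarrow> nat) \<Rightarrow> (nat \<Rightarrow> nat multiset) \<Rightarrow> bool" where
  "gwalk n l m \<longleftrightarrow> gpre n l m \<and> (\<forall>t. l t 0 = size (m t)) \<and> (\<forall>t. m (t + n) = m t) \<and> (\<exists>K. bnd K l)"

lemma gpre_heights:
  assumes "gpre n l m" "bnd K l"
  shows "set_mset (m t) \<subseteq> {1..K}"
proof
  fix h assume h: "h \<in># m t"
  have "h \<noteq> 0" using h assms(1) unfolding gpre_def by metis
  then obtain d where d: "h = Suc d" by (cases h) auto
  have "l (Suc t) d \<ge> count (m t) (Suc d)" using assms(1) unfolding gpre_def by (metis le_add2)
  moreover have "count (m t) (Suc d) > 0" using h d by simp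
  ultimately have "l (Suc t) d \<noteq> 0" by linarith
  then have "d < K" using assms(2) unfolding bnd_def by (metis not_le)
  then show "h \<in> {1..K}" using d by simp
qed

lemma bnd_mono: "bnd K l \<Longrightarrow> K \<le> K' \<Longrightarrow> bnd K' l"
  unfolding bnd_def by auto

lemma sum_bnd: "bnd K l \<Longrightarrow> K \<le> K' \<Longrightarrow> (\<Sum>d<K'. l t d) = (\<Sum>d<K. l t d)"
proof -
  assume b: "bnd K l" and k: "K \<le> K'"
  have "(\<Sum>d<K'. l t d) = (\<Sum>d<K. l t d) + (\<Sum>d\<in>{K..<K'}. l t d)"
    using k by (metis atLeast0LessThan sum.atLeastLessThan_concat zero_le)
  also have "(\<Sum>d\<in>{K..<K'}. l t d) = 0" using b unfolding bnd_def by auto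
  finally show ?thesis by simp
qed

text \<open>Landing count via a potential argument.\<close>
lemma gpre_landing:
  assumes g: "gpre n l m" and b: "bnd K l" and c: "c < n"
  shows "l c 0 = (\<Sum>s<n. size (filter_mset (\<lambda>h. (s + h) mod n = c) (m s)))"
proof -
  have rec: "\<And>t d. l (Suc t) d = l t (Suc d) + count (m t) (Suc d)"
    and per: "\<And>t. l (t + n) = l t" using g unfolding gpre_def by auto
  have hts: "\<And>t. set_mset (m t) \<subseteq> {1..K}" using gpre_heights[OF g b] .
  define P where "P \<tau> = (\<Sum>d<K. if (\<tau> + d) mod n = c then l \<tau> d else 0)" for \<tau>
  define F where "F \<tau> = size (filter_mset (\<lambda>h. (\<tau> + h) mod n = c) (m \<tau>))" for \<tau>
  define E where "E \<tau> = (if \<tau> mod n = c then l \<tau> 0 else 0)" for \<tau>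
  have step: "P (Suc \<tau>) + E \<tau> = P \<tau> + F \<tau>" for \<tau>
  proof -
    have "P (Suc \<tau>) = (\<Sum>d<K. if (\<tau> + Suc d) mod n = c then l \<tau> (Suc d) + count (m \<tau>) (Suc d) else 0)"
      unfolding P_def rec by simp
    also have "\<dots> = (\<Sum>d<K. if (\<tau> + Suc d) mod n = c then l \<tau> (Suc d) else 0) +
                      (\<Sum>d<K. if (\<tau> + Suc d) mod n = c then count (m \<tau>) (Suc d) else 0)"
      unfolding if_add0 sum.distrib ..
    also have "(\<Sum>d<K. if (\<tau> + Suc d) mod n = c then count (m \<tau>) (Suc d) else 0) = F \<tau>"
      unfolding F_def by (rule size_filter_count[OF hts, symmetric])
    finally have A1: "P (Suc \<tau>) = (\<Sum>d<K. if (\<tau> + Suc d) mod n = c then l \<tau> (Suc d) else 0) + F \<tau>" .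
    have "(\<Sum>d<K. if (\<tau> + Suc d) mod n = c then l \<tau> (Suc d) else 0) + E \<tau> =
               (\<Sum>d<Suc K. if (\<tau> + d) mod n = c then l \<tau> d else 0)"
      unfolding E_def sum.lessThan_Suc_shift by simp
    also have "\<dots> = P \<tau>" unfolding P_def using bndD[OF b, of \<tau>] by simp
    finally show ?thesis using A1 by simp
  qed
  have "(\<Sum>\<tau><n. P (Suc \<tau>)) = (\<Sum>\<tau><n. P \<tau>)"
  proof -
    have "(\<Sum>\<tau><n. P (Suc \<tau>)) + P 0 = (\<Sum>\<tau><Suc n. P \<tau>)" unfolding sum.lessThan_Suc_shift by simp
    also have "\<dots> = (\<Sum>\<tau><n. P \<tau>) + P n" by simp
    also have "P n = P 0"
    proof -
      have ln: "l n = l 0" using per[of 0] by simp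
      show ?thesis unfolding P_def ln by simp
    qed
    finally show ?thesis by simp
  qed
  moreover have "(\<Sum>\<tau><n. P (Suc \<tau>)) + (\<Sum>\<tau><n. E \<tau>) = (\<Sum>\<tau><n. P \<tau>) + (\<Sum>\<tau><n. F \<tau>)"
    using step by (simp add: sum.distrib[symmetric])
  ultimately have "(\<Sum>\<tau><n. E \<tau>) = (\<Sum>\<tau><n. F \<tau>)" by simp
  moreover have "(\<Sum>\<tau><n. E \<tau>) = l c 0"
  proof -
    have "(\<Sum>\<tau><n. E \<tau>) = (\<Sum>\<tau><n. if \<tau> = c then l \<tau> 0 else 0)"
      unfolding E_def by (intro sum.cong refl) auto
    also have "\<dots> = l c 0" using c by simp
    finally show ?thesis .
  qed
  ultimately show ?thesis unfolding F_def by simp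
qed

lemma gwalk_weight:
  assumes g: "gpre n l m" and sz: "\<And>t. l t 0 = size (m t)" and b: "bnd K l"
  shows "(\<Sum>t<n. sum_mset (m t)) = n * (\<Sum>d<K. l 0 d)"
    and "\<And>t. (\<Sum>d<K. l t d) = (\<Sum>d<K. l 0 d)"
proof -
  have rec: "\<And>t d. l (Suc t) d = l t (Suc d) + count (m t) (Suc d)"
    and per: "\<And>t. l (t + n) = l t" using g unfolding gpre_def by auto
  have hts: "\<And>t. set_mset (m t) \<subseteq> {1..K}" using gpre_heights[OF g b] .
  define B where "B t = (\<Sum>d<K. l t d)" for t
  define P where "P t = (\<Sum>d<K. d * l t d)" for t
  have sh: "(\<Sum>d<K. l t (Suc d)) + l t 0 = B t" for t
  proof -
    have "(\<Sum>d<K. l t (Suc d)) + l t 0 = (\<Sum>d<Suc K. l t d)" unfolding sum.lessThan_Suc_shift by simp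
    also have "\<dots> = B t" unfolding B_def using bndD[OF b, of t] by simp
    finally show ?thesis .
  qed
  have consB: "B (Suc t) = B t" for t
  proof -
    have "B (Suc t) = (\<Sum>d<K. l t (Suc d)) + (\<Sum>d<K. count (m t) (Suc d))"
      unfolding B_def by (simp add: rec sum.distrib)
    also have "(\<Sum>d<K. count (m t) (Suc d)) = l t 0" using size_count[OF hts] sz by simp
    finally show ?thesis using sh by simp
  qed
  have B0: "B t = B 0" for t by (induction t) (use consB in auto)
  then show "\<And>t. (\<Sum>d<K. l t d) = (\<Sum>d<K. l 0 d)" unfolding B_def by blast
  have stepP: "P (Suc t) + B t = P t + sum_mset (m t)" for t
  proof -
    have "P (Suc t) = (\<Sum>d<K. d * l t (Suc d)) + (\<Sum>d<K. d * count (m t) (Suc d))"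
      unfolding P_def by (simp add: rec sum.distrib algebra_simps)
    moreover have "(\<Sum>d<K. d * l t (Suc d)) + (\<Sum>d<K. l t (Suc d)) = P t"
    proof -
      have "(\<Sum>d<K. d * l t (Suc d)) + (\<Sum>d<K. l t (Suc d)) = (\<Sum>d<K. Suc d * l t (Suc d))"
        by (simp add: sum.distrib)
      also have "\<dots> = (\<Sum>d<Suc K. d * l t d)" unfolding sum.lessThan_Suc_shift by simp
      also have "\<dots> = P t" unfolding P_def using bndD[OF b, of t] by simp
      finally show ?thesis .
    qed
    moreover have "(\<Sum>d<K. d * count (m t) (Suc d)) + (\<Sum>d<K. count (m t) (Suc d)) = sum_mset (m t)"
    proof -
      have "(\<Sum>d<K. d * count (m t) (Suc d)) + (\<Sum>d<K. count (m t) (Suc d)) =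
            (\<Sum>d<K. count (m t) (Suc d) * Suc d)"
        by (simp add: sum.distrib algebra_simps)
      also have "\<dots> = sum_mset (m t)" using summset_count[OF hts] by simp
      finally show ?thesis .
    qed
    moreover have "(\<Sum>d<K. count (m t) (Suc d)) = l t 0" using size_count[OF hts] sz by simp
    ultimately show ?thesis using sh[of t] by linarith
  qed
  have "(\<Sum>t<n. P (Suc t)) = (\<Sum>t<n. P t)"
  proof -
    have "(\<Sum>t<n. P (Suc t)) + P 0 = (\<Sum>t<Suc n. P t)" unfolding sum.lessThan_Suc_shift by simp
    also have "\<dots> = (\<Sum>t<n. P t) + P n" by simp
    also have "P n = P 0"
    proof -
      have ln: "l n = l 0" using per[of 0] by simp
      show ?thesis unfolding P_def ln by simp
    qed
    finally show ?thesis by simp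
  qed
  moreover have "(\<Sum>t<n. P (Suc t)) + (\<Sum>t<n. B t) = (\<Sum>t<n. P t) + (\<Sum>t<n. sum_mset (m t))"
    using stepP by (simp add: sum.distrib[symmetric])
  ultimately have "(\<Sum>t<n. sum_mset (m t)) = (\<Sum>t<n. B t)" by simp
  also have "\<dots> = (\<Sum>t<n. B 0)" by (rule sum.cong) (auto intro: B0)
  also have "\<dots> = n * B 0" by simp
  finally show "(\<Sum>t<n. sum_mset (m t)) = n * (\<Sum>d<K. l 0 d)" unfolding B_def .
qed

lemma gpre_unroll:
  assumes g: "gpre n l m"
  shows "l (t + j) d = l t (d + j) + (\<Sum>k<j. count (m (t + k)) (d + j - k))"
proof (induction j arbitrary: d)
  case 0 show ?case by simp
next
  case (Suc j)
  have rec: "\<And>t d. l (Suc t) d = l t (Suc d) + count (m t) (Suc d)" using g unfolding gpre_def by auto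
  have "l (t + Suc j) d = l (t + j) (Suc d) + count (m (t + j)) (Suc d)" using rec by simp
  also have "\<dots> = l t (Suc d + j) + (\<Sum>k<j. count (m (t + k)) (Suc d + j - k)) + count (m (t + j)) (Suc d)"
    using Suc.IH[of "Suc d"] by simp
  also have "\<dots> = l t (d + Suc j) + (\<Sum>k<Suc j. count (m (t + k)) (d + Suc j - k))"
    by simp
  finally show ?case .
qed

lemma gpre_unique:
  assumes n: "n \<ge> 1" and g1: "gpre n l m" and g2: "gpre n l' m" and b1: "bnd K l" and b2: "bnd K l'"
  shows "l = l'"
proof (intro ext)
  fix t d
  have p1: "\<forall>t. l (t + n) = l t" and p2: "\<forall>t. l' (t + n) = l' t" using g1 g2 unfolding gpre_def by auto
  have "l t d = l (t + n * K) d" using periodic_mult[OF p1] by simp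
  also have "\<dots> = l t (d + n * K) + (\<Sum>k<n * K. count (m (t + k)) (d + n * K - k))"
    by (rule gpre_unroll[OF g1])
  also have "l t (d + n * K) = 0" using b1 n unfolding bnd_def by (metis le_add2 mult_le_mono1 mult_1 le_trans)
  also have "l' t (d + n * K) = 0" using b2 n unfolding bnd_def by (metis le_add2 mult_le_mono1 mult_1 le_trans)
  then have "l' (t + n * K) d = (\<Sum>k<n * K. count (m (t + k)) (d + n * K - k))"
    using gpre_unroll[OF g2, of t "n * K" d] by simp
  moreover have "l' (t + n * K) d = l' t d" using periodic_mult[OF p2] by simp
  ultimately show "l t d = l' t d" by simp
qed

definition mp :: "nat \<Rightarrow> (nat \<Rightarrow> nat multiset) \<Rightarrow> nat \<Rightarrow> nat multiset" where
  "mp n M t = M (t mod n)"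

definition Hs :: "nat \<Rightarrow> (nat \<Rightarrow> nat multiset) \<Rightarrow> nat" where
  "Hs n M = (\<Sum>s<n. sum_mset (M s))"

definition lM :: "nat \<Rightarrow> (nat \<Rightarrow> nat multiset) \<Rightarrow> nat \<Rightarrow> nat \<Rightarrow> nat" where
  "lM n M t d = (\<Sum>k<n * Hs n M. count (mp n M (t + k)) (d + n * Hs n M - k))"

lemma real_div_cancel: "(n::nat) \<ge> 1 \<Longrightarrow> real (n * x) / real n = real x"
  by simp

lemma mem_le_sum_mset: "(h::nat) \<in># M \<Longrightarrow> h \<le> sum_mset M"
  by (metis le_add1 multi_member_split sum_mset.add_mset)

lemma ss_heights:
  assumes n: "n \<ge> 1" and M: "M \<in> multiplex_siteswaps n" and h: "h \<in># mp n M t"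
  shows "1 \<le> h \<and> h \<le> Hs n M \<and> Hs n M \<le> n * Hs n M"
proof -
  have s: "t mod n < n" using n by simp
  have hm: "h \<in># M (t mod n)" using h unfolding mp_def .
  have "0 < h" using M s hm unfolding multiplex_siteswaps_def by blast
  moreover have "h \<le> sum_mset (M (t mod n))" using hm by (rule mem_le_sum_mset)
  moreover have "sum_mset (M (t mod n)) \<le> Hs n M" unfolding Hs_def
    using s by (intro member_le_sum) auto
  moreover have "Hs n M \<le> n * Hs n M" using n by simp
  ultimately show ?thesis by linarith
qed

lemma mp_periodic: "mp n M (t + n) = mp n M t"
  unfolding mp_def by simp

lemma mp_periodic_mult: "mp n M (t + n * k) = mp n M t"
  unfolding mp_def by simp

lemma ss_gpre:
  assumes n: "n \<ge> 1" and M: "M \<in> multiplex_siteswaps n"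
  shows "gpre n (lM n M) (mp n M)" "bnd (n * Hs n M) (lM n M)"
proof -
  let ?J = "n * Hs n M"
  have hb: "\<And>t h. h \<in># mp n M t \<Longrightarrow> 1 \<le> h \<and> h \<le> ?J"
    using ss_heights[OF n M] by (meson le_trans)
  have big: "\<And>t h. ?J < h \<Longrightarrow> count (mp n M t) h = 0"
    using hb by (meson count_inI not_le)
  have rec: "lM n M (Suc t) d = lM n M t (Suc d) + count (mp n M t) (Suc d)" for t d
  proof -
    define f where "f k = count (mp n M (t + k)) (Suc d + ?J - k)" for k
    have "lM n M (Suc t) d = (\<Sum>k<?J. f (Suc k))"
      unfolding lM_def f_def by (intro sum.cong refl) simp
    moreover have "lM n M t (Suc d) = (\<Sum>k<?J. f k)"
      unfolding lM_def f_def by simp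
    moreover have "(\<Sum>k<?J. f (Suc k)) + f 0 = (\<Sum>k<?J. f k) + f ?J"
    proof -
      have "(\<Sum>k<?J. f (Suc k)) + f 0 = (\<Sum>k<Suc ?J. f k)" unfolding sum.lessThan_Suc_shift by simp
      also have "\<dots> = (\<Sum>k<?J. f k) + f ?J" by simp
      finally show ?thesis .
    qed
    moreover have "f 0 = 0" unfolding f_def using big by simp
    moreover have "f ?J = count (mp n M t) (Suc d)" unfolding f_def using mp_periodic_mult[of n M t "Hs n M"] by simp
    ultimately show ?thesis by simp
  qed
  have per: "lM n M (t + n) = lM n M t" for t
  proof
    fix d
    show "lM n M (t + n) d = lM n M t d" unfolding lM_def
      by (intro sum.cong refl) (metis add.assoc add.commute mp_periodic)
  qed
  have pos: "0 \<notin># mp n M t" for t using hb by fastforce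
  show "gpre n (lM n M) (mp n M)" unfolding gpre_def using rec per pos by blast
  show "bnd ?J (lM n M)" unfolding bnd_def lM_def
  proof (intro allI impI)
    fix t d assume "?J \<le> d"
    show "(\<Sum>k<?J. count (mp n M (t + k)) (d + ?J - k)) = 0"
      by (rule sum.neutral) (use big \<open>?J \<le> d\<close> in auto)
  qed
qed

lemma ss_gwalk:
  assumes n: "n \<ge> 1" and M: "M \<in> multiplex_siteswaps n"
  shows "gwalk n (lM n M) (mp n M)"
proof -
  note g = ss_gpre[OF n M]
  have per: "\<forall>t. lM n M (t + n) = lM n M t" using g(1) unfolding gpre_def by blast
  have sz: "lM n M t 0 = size (mp n M t)" for t
  proof -
    have c: "t mod n < n" using n by simp
    have "lM n M t 0 = lM n M (t mod n) 0" using periodic_mod[OF per, of t] by simp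
    also have "\<dots> = (\<Sum>s<n. size (filter_mset (\<lambda>h. (s + h) mod n = t mod n) (mp n M s)))"
      by (rule gpre_landing[OF g(1) g(2) c])
    also have "\<dots> = (\<Sum>s<n. size (filter_mset (\<lambda>h. (s + h) mod n = t mod n) (M s)))"
      by (intro sum.cong refl) (simp add: mp_def)
    also have "\<dots> = size (M (t mod n))"
    proof -
      have "\<forall>t<n. size (M t) = (\<Sum>s<n. size (filter_mset (\<lambda>h. (s + h) mod n = t) (M s)))"
        using M unfolding multiplex_siteswaps_def by blast
      then show ?thesis using c by simp
    qed
    finally show ?thesis unfolding mp_def .
  qed
  show ?thesis unfolding gwalk_def using g sz mp_periodic by blast
qed

lemma ss_balls:
  assumes n: "n \<ge> 1" and M: "M \<in> multiplex_siteswaps n" and b: "bnd K (lM n M)"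
  shows "num_balls n M = real (\<Sum>d<K. lM n M 0 d)"
proof -
  note g = ss_gwalk[OF n M]
  have "(\<Sum>t<n. sum_mset (mp n M t)) = n * (\<Sum>d<K. lM n M 0 d)"
    using gwalk_weight(1)[of n "lM n M" "mp n M" K] g b unfolding gwalk_def by blast
  moreover have "(\<Sum>t<n. sum_mset (mp n M t)) = (\<Sum>t<n. sum_mset (M t))"
    by (intro sum.cong refl) (simp add: mp_def)
  ultimately have "(\<Sum>t<n. sum_mset (M t)) = n * (\<Sum>d<K. lM n M 0 d)" by simp
  then have "num_balls n M = real (n * (\<Sum>d<K. lM n M 0 d)) / real n"
    unfolding num_balls_def by (simp only:)
  then show ?thesis using real_div_cancel[OF n] by (simp only:)
qed

lemma gwalk_restrict:
  assumes n: "n \<ge> 1" and g: "gwalk n l m" and b: "bnd K l"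
  defines "M \<equiv> (\<lambda>t. if t < n then m t else {#})"
  shows "M \<in> multiplex_siteswaps n" "mp n M = m" "num_balls n M = real (\<Sum>d<K. l 0 d)"
proof -
  have gp: "gpre n l m" and sz: "\<And>t. l t 0 = size (m t)" and mper: "\<forall>t. m (t + n) = m t"
    using g unfolding gwalk_def by auto
  show "mp n M = m"
  proof
    fix t show "mp n M t = m t" unfolding mp_def M_def using n periodic_mod[OF mper, of t] by simp
  qed
  show "M \<in> multiplex_siteswaps n" unfolding multiplex_siteswaps_def
  proof (intro CollectI conjI allI impI ballI)
    fix t assume "n \<le> t" then show "M t = {#}" unfolding M_def by simp
  next
    fix t h assume "t < n" "h \<in># M t"
    then have "h \<in># m t" unfolding M_def by simp
    moreover have "0 \<notin># m t" using gp unfolding gpre_def by blast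
    ultimately show "0 < h" by (metis gr0I)
  next
    fix t assume t: "t < n"
    have "size (M t) = l t 0" using t sz unfolding M_def by simp
    also have "\<dots> = (\<Sum>s<n. size (filter_mset (\<lambda>h. (s + h) mod n = t) (m s)))"
      by (rule gpre_landing[OF gp b t])
    also have "\<dots> = (\<Sum>s<n. size (filter_mset (\<lambda>h. (s + h) mod n = t) (M s)))"
      by (intro sum.cong refl) (simp add: M_def)
    finally show "size (M t) = (\<Sum>s<n. size (filter_mset (\<lambda>h. (s + h) mod n = t) (M s)))" .
  qed
  have "(\<Sum>t<n. sum_mset (m t)) = n * (\<Sum>d<K. l 0 d)"
    using gwalk_weight(1)[OF gp _ b] sz by blast
  moreover have "(\<Sum>t<n. sum_mset (M t)) = (\<Sum>t<n. sum_mset (m t))"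
    by (intro sum.cong refl) (simp add: M_def)
  ultimately have "(\<Sum>t<n. sum_mset (M t)) = n * (\<Sum>d<K. l 0 d)" by simp
  then have "num_balls n M = real (n * (\<Sum>d<K. l 0 d)) / real n"
    unfolding num_balls_def by (simp only:)
  then show "num_balls n M = real (\<Sum>d<K. l 0 d)" using real_div_cancel[OF n] by (simp only:)
qed

lemma gpre_m_unique:
  assumes "gpre n l m" "gpre n l m'" shows "m = m'"
proof
  fix t
  show "m t = m' t" unfolding multiset_eq_iff
  proof
    fix h
    show "count (m t) h = count (m' t) h"
    proof (cases h)
      case 0 then show ?thesis using assms unfolding gpre_def by (simp add: not_in_iff)
    next
      case (Suc d)
      have "l (Suc t) d = l t (Suc d) + count (m t) (Suc d)" "l (Suc t) d = l t (Suc d) + count (m' t) (Suc d)"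
        using assms unfolding gpre_def by auto
      then show ?thesis using Suc by simp
    qed
  qed
qed

lemma mp_inj:
  assumes "M \<in> multiplex_siteswaps n" "M' \<in> multiplex_siteswaps n" "mp n M = mp n M'"
  shows "M = M'"
proof
  fix t
  show "M t = M' t"
  proof (cases "t < n")
    case True
    then show ?thesis using assms(3) unfolding mp_def by (metis mod_less)
  next
    case False
    then show ?thesis using assms(1,2) unfolding multiplex_siteswaps_def by auto
  qed
qed

definition dl :: "(nat \<Rightarrow> nat) \<Rightarrow> nat list" where
  "dl f = sorted_list_of_set {d. 0 < f d}"

definition sp :: "(nat \<Rightarrow> nat) \<Rightarrow> nat list" where
  "sp f = map f (dl f)"

definition rank :: "(nat \<Rightarrow> nat) \<Rightarrow> nat \<Rightarrow> nat" where
  "rank f d = card {x. x < d \<and> 0 < f x}"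

lemma sorted_list_unique:
  assumes "finite A" "sorted_wrt (<) xs" "set xs = A"
  shows "sorted_list_of_set A = xs"
proof -
  have "distinct xs" using assms(2) strict_sorted_iff by blast
  then have "length xs = card A" using assms(3) distinct_card by metis
  then show ?thesis using sorted_list_of_set_unique[OF assms(1)] assms(2,3) by blast
qed

context
  fixes f :: "nat \<Rightarrow> nat"
  assumes fin: "finite {d. 0 < f d}"
begin

lemma dl_props: "sorted_wrt (<) (dl f)" "distinct (dl f)" "set (dl f) = {d. 0 < f d}"
  "length (dl f) = card {d. 0 < f d}"
  unfolding dl_def using fin by (auto simp: strict_sorted_list_of_set)

lemma dl_pos: "p < length (dl f) \<Longrightarrow> 0 < f (dl f ! p)"
  using dl_props(3) nth_mem by blast

lemma dl_less: "p < q \<Longrightarrow> q < length (dl f) \<Longrightarrow> dl f ! p < dl f ! q"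
  using dl_props(1) sorted_wrt_nth_less by blast

lemma dl_mem: "0 < f d \<Longrightarrow> \<exists>j < length (dl f). dl f ! j = d"
  using dl_props(3) by (metis in_set_conv_nth mem_Collect_eq)

lemma rank_nth: assumes p: "p < length (dl f)" shows "rank f (dl f ! p) = p"
proof -
  have "{x. x < dl f ! p \<and> 0 < f x} = (\<lambda>j. dl f ! j) ` {..<p}"
  proof (intro equalityI subsetI)
    fix x assume "x \<in> {x. x < dl f ! p \<and> 0 < f x}"
    then have x: "x < dl f ! p" "0 < f x" by auto
    then obtain j where j: "j < length (dl f)" "dl f ! j = x" using dl_mem by blast
    have "j < p"
    proof (rule ccontr)
      assume "\<not> j < p"
      then have "p = j \<or> p < j" by linarith
      then have "dl f ! p \<le> dl f ! j" using dl_less j(1) by fastforce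
      then show False using x j by simp
    qed
    then show "x \<in> (\<lambda>j. dl f ! j) ` {..<p}" using j by blast
  next
    fix x assume "x \<in> (\<lambda>j. dl f ! j) ` {..<p}"
    then obtain j where j: "j < p" "x = dl f ! j" by blast
    then show "x \<in> {x. x < dl f ! p \<and> 0 < f x}" using dl_less[OF j(1) p] dl_pos p by auto
  qed
  moreover have "inj_on (\<lambda>j. dl f ! j) {..<p}"
    using dl_props(2) p by (auto simp: inj_on_def nth_eq_iff_index_eq)
  ultimately show ?thesis unfolding rank_def by (simp add: card_image)
qed

lemma rank_mem: assumes "0 < f d" shows "rank f d < length (dl f)" "dl f ! rank f d = d"
proof -
  obtain j where j: "j < length (dl f)" "dl f ! j = d" using dl_mem assms by blast
  then have "rank f d = j" using rank_nth by blast
  then show "rank f d < length (dl f)" "dl f ! rank f d = d" using j by auto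
qed

lemma rank_less: assumes "x < y" "0 < f x" shows "rank f x < rank f y"
proof -
  have "{z. z < x \<and> 0 < f z} \<subset> {z. z < y \<and> 0 < f z}" using assms by auto
  moreover have "finite {z. z < y \<and> 0 < f z}" by simp
  ultimately show ?thesis unfolding rank_def by (rule psubset_card_mono[rotated])
qed

lemma dl_0: assumes "0 < f 0" shows "dl f ! 0 = 0" "0 < length (dl f)"
  using rank_mem[OF assms] unfolding rank_def by auto

lemma sum_sp: assumes "\<forall>d. K \<le> d \<longrightarrow> f d = 0" shows "sum_list (sp f) = (\<Sum>d<K. f d)"
proof -
  have "sum_list (sp f) = (\<Sum>d\<in>set (dl f). f d)" unfolding sp_def
    using dl_props(2) by (simp add: sum_list_distinct_conv_sum_set)
  also have "\<dots> = (\<Sum>d\<in>{d. 0 < f d}. f d)" using dl_props(3) by simp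
  also have "\<dots> = (\<Sum>d<K. f d)"
  proof (rule sum.mono_neutral_left)
    show "finite {..<K}" by simp
    show "{d. 0 < f d} \<subseteq> {..<K}" using assms by (auto simp: not_less[symmetric])
    show "\<forall>i\<in>{..<K} - {d. 0 < f d}. f i = 0" by simp
  qed
  finally show ?thesis .
qed

lemma sp_pos: "x \<in> set (sp f) \<Longrightarrow> 0 < x"
  unfolding sp_def using dl_props(3) by auto

end

lemma dl_shift:
  assumes fin: "finite {d. 0 < g d}" and f0: "f 0 = 0" and fg: "\<And>d. g d = f (Suc d)"
  shows "dl f = map Suc (dl g)"
proof -
  have S: "{d. 0 < f d} = Suc ` {d. 0 < g d}"
  proof (intro equalityI subsetI)
    fix x assume "x \<in> {d. 0 < f d}"
    then have "0 < f x" by simp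
    with f0 obtain y where "x = Suc y" by (cases x) auto
    then show "x \<in> Suc ` {d. 0 < g d}" using \<open>0 < f x\<close> fg by auto
  qed (use fg in auto)
  have "sorted_wrt (<) (map Suc (dl g))" using dl_props(1)[OF fin] by (simp add: sorted_wrt_map)
  moreover have "set (map Suc (dl g)) = {d. 0 < f d}" using dl_props(3)[OF fin] S by simp
  moreover have "finite {d. 0 < f d}" using S fin by simp
  ultimately show ?thesis unfolding dl_def by (intro sorted_list_unique) (auto simp: dl_def)
qed

lemma sp_shift:
  assumes fin: "finite {d. 0 < g d}" and f0: "f 0 = 0" and fg: "\<And>d. g d = f (Suc d)"
  shows "sp f = sp g"
  unfolding sp_def dl_shift[OF assms] using fg by simp

lemma rank_shift:
  assumes f0: "f 0 = 0" and fg: "\<And>d. g d = f (Suc d)"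
  shows "rank g d = rank f (Suc d)"
proof -
  have "{x. x < Suc d \<and> 0 < f x} = Suc ` {x. x < d \<and> 0 < g x}"
  proof (intro equalityI subsetI)
    fix x assume "x \<in> {x. x < Suc d \<and> 0 < f x}"
    then have x: "x < Suc d" "0 < f x" by auto
    with f0 obtain y where "x = Suc y" by (cases x) auto
    then show "x \<in> Suc ` {x. x < d \<and> 0 < g x}" using x fg by auto
  qed (use fg in auto)
  then show ?thesis unfolding rank_def by (simp add: card_image)
qed

definition ixf :: "(nat \<Rightarrow> nat) \<Rightarrow> (nat \<Rightarrow> nat) \<Rightarrow> nat list \<Rightarrow> nat \<Rightarrow> nat" where
  "ixf f g e p = (if p < length (dl f) then Suc (rank g (dl f ! p - 1))
                  else p - length (dl f) + length (dl g) + 1)"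

definition cardof :: "(nat \<Rightarrow> nat) \<Rightarrow> (nat \<Rightarrow> nat) \<Rightarrow> nat list \<Rightarrow> card" where
  "cardof f g e = (if f 0 = 0 then Trivial (sp f @ e)
     else Throw (sp f @ e) (sp g @ e) (map (ixf f g e) [1..<length (dl f) + length e]))"

definition pair_ok :: "(nat \<Rightarrow> nat) \<Rightarrow> (nat \<Rightarrow> nat) \<Rightarrow> bool" where
  "pair_ok f g \<longleftrightarrow> finite {d. 0 < f d} \<and> finite {d. 0 < g d} \<and> (\<forall>d. f (Suc d) \<le> g d) \<and>
     (f 0 = 0 \<longrightarrow> (\<forall>d. g d = f (Suc d)))"

lemma left_cardof: "left_part (cardof f g e) = sp f @ e"
  unfolding cardof_def by simp

lemma right_cardof: assumes ok: "pair_ok f g" shows "right_part (cardof f g e) = sp g @ e"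
proof (cases "f 0 = 0")
  case True
  have fing: "finite {d. 0 < g d}" using ok unfolding pair_ok_def by auto
  have gf: "\<And>d. g d = f (Suc d)" using ok True unfolding pair_ok_def by auto
  show ?thesis unfolding cardof_def using True sp_shift[OF fing True gf] by simp
next
  case False then show ?thesis unfolding cardof_def by simp
qed

lemma length_sp: "length (sp f) = length (dl f)"
  unfolding sp_def by simp

lemma nth_sp: "p < length (dl f) \<Longrightarrow> sp f ! p = f (dl f ! p)"
  unfolding sp_def by simp

lemma ixf_live:
  assumes ok: "pair_ok f g" and f0: "0 < f 0" and p: "1 \<le> p" "p < length (dl f)"
  shows "1 \<le> dl f ! p" "f (dl f ! p) \<le> g (dl f ! p - 1)" "0 < g (dl f ! p - 1)"
    "rank g (dl f ! p - 1) < length (dl g)" "dl g ! rank g (dl f ! p - 1) = dl f ! p - 1"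
proof -
  have finf: "finite {d. 0 < f d}" and fing: "finite {d. 0 < g d}" and fg: "\<And>d. f (Suc d) \<le> g d"
    using ok unfolding pair_ok_def by auto
  have "dl f ! 0 < dl f ! p" using dl_less[OF finf] p by simp
  then show d1: "1 \<le> dl f ! p" using dl_0[OF finf f0] by simp
  have "f (dl f ! p) = f (Suc (dl f ! p - 1))" using d1 by simp
  then show fle: "f (dl f ! p) \<le> g (dl f ! p - 1)" using fg by simp
  moreover have "0 < f (dl f ! p)" using dl_pos[OF finf p(2)] .
  ultimately show gp: "0 < g (dl f ! p - 1)" by linarith
  show "rank g (dl f ! p - 1) < length (dl g)" "dl g ! rank g (dl f ! p - 1) = dl f ! p - 1"
    using rank_mem[OF fing gp] by auto
qed

lemma ixf_mono:
  assumes ok: "pair_ok f g" and f0: "0 < f 0" and p: "1 \<le> p" "p < p'" "p' < length (dl f) + length e"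
  shows "ixf f g e p < ixf f g e p'"
proof -
  have finf: "finite {d. 0 < f d}" and fing: "finite {d. 0 < g d}"
    using ok unfolding pair_ok_def by auto
  show ?thesis
  proof (cases "p' < length (dl f)")
    case True
    then have pl: "p < length (dl f)" using p by simp
    have "dl f ! p < dl f ! p'" using dl_less[OF finf p(2) True] .
    moreover have "1 \<le> dl f ! p" using ixf_live[OF ok f0 p(1) pl] by simp
    ultimately have "dl f ! p - 1 < dl f ! p' - 1" by linarith
    then have "rank g (dl f ! p - 1) < rank g (dl f ! p' - 1)"
      using rank_less[OF fing] ixf_live(3)[OF ok f0 p(1) pl] by blast
    then show ?thesis unfolding ixf_def using pl True by simp
  next
    case False
    show ?thesis
    proof (cases "p < length (dl f)")
      case True
      have "rank g (dl f ! p - 1) < length (dl g)" using ixf_live(4)[OF ok f0 p(1) True] .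
      then show ?thesis unfolding ixf_def using True False by simp
    next
      case False2: False
      then show ?thesis unfolding ixf_def using False p by simp
    qed
  qed
qed

lemma nth_map_upt1: "j < N - 1 \<Longrightarrow> map h [1..<N] ! j = h (Suc j)"
  by simp

lemma parts_append:
  assumes "\<forall>x\<in>set xs. 0 < x" "sum_list xs = i" "e \<in> ord_parts (b - i)" "i \<le> b"
  shows "xs @ e \<in> ord_parts b"
  using assms unfolding ord_parts_def by auto

lemma cardof_cards:
  assumes ok: "pair_ok f g" and sf: "sum_list (sp f) = i" and sg: "sum_list (sp g) = i"
    and e: "e \<in> ord_parts (b - i)" and ib: "i \<le> b"
  shows "cardof f g e \<in> cards b"
proof -
  have finf: "finite {d. 0 < f d}" and fing: "finite {d. 0 < g d}" and fg: "\<And>d. f (Suc d) \<le> g d"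
    using ok unfolding pair_ok_def by auto
  have q: "sp f @ e \<in> ord_parts b" using parts_append[OF _ sf e ib] sp_pos[OF finf] by blast
  have r: "sp g @ e \<in> ord_parts b" using parts_append[OF _ sg e ib] sp_pos[OF fing] by blast
  show ?thesis
  proof (cases "f 0 = 0")
    case True
    then show ?thesis using q unfolding cardof_def cards_def by simp
  next
    case False
    then have f0: "0 < f 0" by simp
    let ?Lf = "length (dl f)" and ?Lg = "length (dl g)" and ?E = "length e"
    let ?q = "sp f @ e" and ?r = "sp g @ e"
    let ?is = "map (ixf f g e) [1..<?Lf + ?E]"
    have Lf: "0 < ?Lf" using dl_0[OF finf f0] by simp
    have qne: "?q \<noteq> []" using Lf length_sp[of f] by auto
    have lq: "length ?q = ?Lf + ?E" and lr: "length ?r = ?Lg + ?E" by (simp_all add: length_sp)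
    have emb: "?is \<in> embeddings ?q ?r"
      unfolding embeddings_def
    proof (simp only: if_not_P[OF qne], intro CollectI conjI allI impI)
      show "length ?is = length ?q - 1" using lq by simp
      show "sorted_wrt (<) ?is" unfolding sorted_wrt_iff_nth_less
      proof (intro allI impI)
        fix i j assume ij: "i < j" "j < length ?is"
        then show "?is ! i < ?is ! j" using ixf_mono[OF ok f0, of "Suc i" "Suc j" e] by simp
      qed
    next
      fix j assume j: "j < length ?is"
      let ?p = "Suc j"
      have p: "?p < ?Lf + ?E" using j by simp
      have isj: "?is ! j = ixf f g e ?p" using j by simp
      show "1 \<le> ?is ! j" unfolding isj ixf_def by simp
      show "?is ! j \<le> length ?r"
      proof (cases "?p < ?Lf")
        case True
        then show ?thesis unfolding isj ixf_def using ixf_live(4)[OF ok f0 _ True] lr by simp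
      next
        case False
        then show ?thesis unfolding isj ixf_def using p lr by simp
      qed
      show "?q ! (j + 1) \<le> ?r ! (?is ! j - 1)"
      proof (cases "?p < ?Lf")
        case True
        have "?q ! ?p = f (dl f ! ?p)" using True by (simp add: nth_append length_sp nth_sp)
        also have "\<dots> \<le> g (dl f ! ?p - 1)" using ixf_live(2)[OF ok f0 _ True] by simp
        also have "\<dots> = ?r ! (?is ! j - 1)"
          unfolding isj ixf_def using True ixf_live(4,5)[OF ok f0 _ True]
          by (simp add: nth_append length_sp nth_sp)
        finally show ?thesis by simp
      next
        case False
        have "?q ! ?p = e ! (?p - ?Lf)" using False by (simp add: nth_append length_sp)
        also have "\<dots> = ?r ! (?is ! j - 1)"
        proof -
          have ix: "ixf f g e ?p - 1 = ?Lg + (?p - ?Lf)" unfolding ixf_def using False by simp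
          show ?thesis unfolding isj ix by (simp add: nth_append length_sp)
        qed
        finally show ?thesis by simp
      qed
    qed
    show ?thesis unfolding cardof_def cards_def using False q r qne emb by auto
  qed
qed

fun nxt :: "card \<Rightarrow> nat \<Rightarrow> nat option" where
  "nxt (Trivial q) p = Some p"
| "nxt (Throw q r is) p = (if p = 0 then None else Some (is ! (p - 1) - 1))"

fun trk :: "(nat \<Rightarrow> card) \<Rightarrow> nat \<Rightarrow> nat \<Rightarrow> nat \<Rightarrow> nat option" where
  "trk w t p 0 = Some p"
| "trk w t p (Suc k) = (case nxt (w t) p of None \<Rightarrow> None | Some a \<Rightarrow> trk w (Suc t) a k)"

lemma nxt_cardof_0: "0 < f 0 \<Longrightarrow> nxt (cardof f g e) 0 = None"
  unfolding cardof_def by simp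

lemma nxt_cardof_live:
  assumes ok: "pair_ok f g" and p: "p < length (dl f)" and d: "dl f ! p = Suc d"
  shows "nxt (cardof f g e) p = Some (rank g d)" "rank g d < length (dl g)" "dl g ! rank g d = d"
proof -
  have finf: "finite {d. 0 < f d}" and fing: "finite {d. 0 < g d}" and fg: "\<And>d. f (Suc d) \<le> g d"
    using ok unfolding pair_ok_def by auto
  have "0 < f (Suc d)" using dl_pos[OF finf p] d by simp
  then have gd: "0 < g d" using fg[of d] by linarith
  show "rank g d < length (dl g)" "dl g ! rank g d = d" using rank_mem[OF fing gd] by auto
  show "nxt (cardof f g e) p = Some (rank g d)"
  proof (cases "f 0 = 0")
    case True
    then have gf: "\<And>d. g d = f (Suc d)" using ok unfolding pair_ok_def by auto
    have "rank g d = rank f (Suc d)" using rank_shift[OF True gf] .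
    also have "\<dots> = p" using rank_nth[OF finf p] d by simp
    finally show ?thesis unfolding cardof_def using True by simp
  next
    case False
    then have f0: "0 < f 0" by simp
    have p1: "1 \<le> p"
    proof (rule ccontr)
      assume "\<not> 1 \<le> p" then have "p = 0" by simp
      then show False using dl_0[OF finf f0] d by simp
    qed
    have "map (ixf f g e) [1..<length (dl f) + length e] ! (p - 1) = ixf f g e p"
      using p p1 by simp
    then show ?thesis unfolding cardof_def ixf_def using False p p1 d by simp
  qed
qed

lemma nxt_cardof_idle:
  assumes ok: "pair_ok f g" and p: "length (dl f) \<le> p" "p < length (dl f) + length e"
  shows "nxt (cardof f g e) p = Some (p - length (dl f) + length (dl g))"
proof (cases "f 0 = 0")
  case True
  have fing: "finite {d. 0 < g d}" using ok unfolding pair_ok_def by auto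
  have gf: "\<And>d. g d = f (Suc d)" using ok True unfolding pair_ok_def by auto
  have "length (dl f) = length (dl g)" using dl_shift[OF fing True gf] by simp
  then show ?thesis unfolding cardof_def using True p by simp
next
  case False
  have finf: "finite {d. 0 < f d}" using ok unfolding pair_ok_def by auto
  have "0 < length (dl f)" using dl_0(2)[OF finf] False by simp
  then have p1: "1 \<le> p" using p by linarith
  have "map (ixf f g e) [1..<length (dl f) + length e] ! (p - 1) = ixf f g e p"
    using p p1 by simp
  then show ?thesis unfolding cardof_def ixf_def using False p p1 by simp
qed

definition cwalk :: "(nat \<Rightarrow> card) \<Rightarrow> (nat \<Rightarrow> nat \<Rightarrow> nat) \<Rightarrow> nat list \<Rightarrow> bool" where
  "cwalk w l e \<longleftrightarrow> (\<forall>t. w t = cardof (l t) (l (Suc t)) e) \<and> (\<forall>t. pair_ok (l t) (l (Suc t)))"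

lemma cwalk_live_aux:
  assumes cw: "cwalk w l e"
  shows "\<forall>t p. p < length (dl (l t)) \<longrightarrow> dl (l t) ! p = d \<longrightarrow>
     trk w t p (Suc d) = None \<and> (\<forall>k \<le> d. trk w t p k \<noteq> None)"
proof (induction d)
  case 0
  show ?case
  proof (intro allI impI)
    fix t p assume p: "p < length (dl (l t))" and d: "dl (l t) ! p = 0"
    have ok: "pair_ok (l t) (l (Suc t))" and wt: "w t = cardof (l t) (l (Suc t)) e"
      using cw unfolding cwalk_def by auto
    have fin: "finite {d. 0 < l t d}" using ok unfolding pair_ok_def by auto
    have pos: "0 < l t 0" using dl_pos[OF fin p] d by simp
    have "rank (l t) 0 = p" using rank_nth[OF fin p] d by simp
    then have p0: "p = 0" unfolding rank_def by simp
    have "nxt (w t) p = None" using nxt_cardof_0[of "l t", OF pos] wt p0 by simp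
    then show "trk w t p (Suc 0) = None \<and> (\<forall>k \<le> 0. trk w t p k \<noteq> None)" by simp
  qed
next
  case (Suc d)
  show ?case
  proof (intro allI impI)
    fix t p assume p: "p < length (dl (l t))" and d: "dl (l t) ! p = Suc d"
    have ok: "pair_ok (l t) (l (Suc t))" and wt: "w t = cardof (l t) (l (Suc t)) e"
      using cw unfolding cwalk_def by auto
    note nx1 = nxt_cardof_live(1)[OF ok p d, of e]
    note nx23 = nxt_cardof_live(2,3)[OF ok p d]
    let ?p' = "rank (l (Suc t)) d"
    have IH: "trk w (Suc t) ?p' (Suc d) = None \<and> (\<forall>k \<le> d. trk w (Suc t) ?p' k \<noteq> None)"
      using Suc.IH nx23 by blast
    have nw: "nxt (w t) p = Some ?p'" using nx1 wt by simp
    have "trk w t p (Suc (Suc d)) = None" using IH nw by simp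
    moreover have "\<forall>k \<le> Suc d. trk w t p k \<noteq> None"
    proof (intro allI impI)
      fix k assume k: "k \<le> Suc d"
      show "trk w t p k \<noteq> None"
      proof (cases k)
        case 0 then show ?thesis by simp
      next
        case (Suc k')
        then show ?thesis using IH nw k by simp
      qed
    qed
    ultimately show "trk w t p (Suc (Suc d)) = None \<and> (\<forall>k \<le> Suc d. trk w t p k \<noteq> None)" by blast
  qed
qed

lemma cwalk_live:
  assumes "cwalk w l e" "p < length (dl (l t))"
  shows "trk w t p (Suc (dl (l t) ! p)) = None" "\<And>k. k \<le> dl (l t) ! p \<Longrightarrow> trk w t p k \<noteq> None"
  using cwalk_live_aux[OF assms(1)] assms(2) by blast+

lemma cwalk_idle:
  assumes cw: "cwalk w l e"
  shows "length (dl (l t)) \<le> p \<Longrightarrow> p < length (dl (l t)) + length e \<Longrightarrow> trk w t p k \<noteq> None"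
proof (induction k arbitrary: t p)
  case 0 then show ?case by simp
next
  case (Suc k)
  have ok: "pair_ok (l t) (l (Suc t))" and wt: "w t = cardof (l t) (l (Suc t)) e"
    using cw unfolding cwalk_def by auto
  let ?p' = "p - length (dl (l t)) + length (dl (l (Suc t)))"
  have "nxt (w t) p = Some ?p'" using nxt_cardof_idle[OF ok Suc.prems] wt by simp
  moreover have "trk w (Suc t) ?p' k \<noteq> None" using Suc.IH Suc.prems by simp
  ultimately show ?case by simp
qed

definition land :: "(nat \<Rightarrow> card) \<Rightarrow> nat \<Rightarrow> nat \<Rightarrow> nat" where
  "land w t p = (LEAST k. trk w t p (Suc k) = None)"

lemma land_eq:
  assumes "trk w t p (Suc d) = None" "\<And>k. k \<le> d \<Longrightarrow> trk w t p k \<noteq> None"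
  shows "land w t p = d"
  unfolding land_def
proof (rule Least_equality)
  show "trk w t p (Suc d) = None" by (rule assms(1))
  fix k assume "trk w t p (Suc k) = None"
  then show "d \<le> k" using assms(2)[of "Suc k"] by (metis not_less_eq_eq)
qed

lemma cwalk_land: "cwalk w l e \<Longrightarrow> p < length (dl (l t)) \<Longrightarrow> land w t p = dl (l t) ! p"
  using land_eq cwalk_live by metis

lemma cwalk_inj:
  assumes cw1: "cwalk w l e" and cw2: "cwalk w l' e'"
  shows "l = l' \<and> e = e'"
proof -
  have fin1: "\<And>t. finite {d. 0 < l t d}" and fin2: "\<And>t. finite {d. 0 < l' t d}"
    using cw1 cw2 unfolding cwalk_def pair_ok_def by auto
  have main: "l t = l' t \<and> e = e'" for t
  proof -
    have w1: "w t = cardof (l t) (l (Suc t)) e" and w2: "w t = cardof (l' t) (l' (Suc t)) e'"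
      using cw1 cw2 unfolding cwalk_def by auto
    have lp: "sp (l t) @ e = sp (l' t) @ e'" using w1 w2 left_cardof by metis
    let ?L = "length (dl (l t))" and ?L' = "length (dl (l' t))"
    have len: "?L + length e = ?L' + length e'" using arg_cong[OF lp, of length] by (simp add: length_sp)
    have LL: "?L = ?L'"
    proof (rule ccontr)
      assume "?L \<noteq> ?L'"
      then consider "?L < ?L'" | "?L' < ?L" by linarith
      then show False
      proof cases
        case 1
        have A: "trk w t ?L (Suc (dl (l' t) ! ?L)) = None" using cwalk_live(1)[OF cw2 1] .
        have "e \<noteq> []" using len 1 by auto
        then have "trk w t ?L (Suc (dl (l' t) ! ?L)) \<noteq> None"
          using cwalk_idle[OF cw1, of t ?L "Suc (dl (l' t) ! ?L)"] len 1 by (simp del: trk.simps)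
        then show False using A by (simp del: trk.simps)
      next
        case 2
        have A: "trk w t ?L' (Suc (dl (l t) ! ?L')) = None" using cwalk_live(1)[OF cw1 2] .
        have "e' \<noteq> []" using len 2 by auto
        then have "trk w t ?L' (Suc (dl (l t) ! ?L')) \<noteq> None"
          using cwalk_idle[OF cw2, of t ?L' "Suc (dl (l t) ! ?L')"] len 2 by (simp del: trk.simps)
        then show False using A by (simp del: trk.simps)
      qed
    qed
    have spe: "sp (l t) = sp (l' t)" and ee: "e = e'"
      using lp LL by (simp_all add: append_eq_append_conv length_sp)
    have dle: "dl (l t) = dl (l' t)"
    proof (rule nth_equalityI)
      show "length (dl (l t)) = length (dl (l' t))" using LL .
      fix p assume "p < length (dl (l t))"
      then show "dl (l t) ! p = dl (l' t) ! p"
        using cwalk_land[OF cw1] cwalk_land[OF cw2] LL by metis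
    qed
    have "l t = l' t"
    proof
      fix x
      show "l t x = l' t x"
      proof (cases "0 < l t x")
        case True
        then obtain j where j: "j < length (dl (l t))" "dl (l t) ! j = x" using dl_mem[OF fin1] by blast
        have "l t x = sp (l t) ! j" using j by (simp add: nth_sp)
        also have "\<dots> = sp (l' t) ! j" using spe by simp
        also have "\<dots> = l' t x" using j dle LL by (simp add: nth_sp)
        finally show ?thesis .
      next
        case False
        have "\<not> 0 < l' t x"
        proof
          assume "0 < l' t x"
          then have "x \<in> set (dl (l' t))" using dl_props(3)[OF fin2] by simp
          then have "x \<in> set (dl (l t))" using dle by simp
          then show False using dl_props(3)[OF fin1] False by simp
        qed
        then show ?thesis using False by simp
      qed
    qed
    then show ?thesis using ee by simp
  qed
  show ?thesis using main by blast
qed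

lemma trk_snoc: "trk w t p (Suc k) = (case trk w t p k of None \<Rightarrow> None | Some a \<Rightarrow> nxt (w (t + k)) a)"
proof (induction k arbitrary: t p)
  case 0 then show ?case by (cases "nxt (w t) p") auto
next
  case (Suc k)
  show ?case
  proof (cases "nxt (w t) p")
    case None then show ?thesis by simp
  next
    case (Some a)
    have e1: "trk w t p (Suc k) = trk w (Suc t) a k" using Some by simp
    have e2: "t + Suc k = Suc t + k" by simp
    show ?thesis unfolding e2 e1 using Some Suc.IH[of "Suc t" a] by simp
  qed
qed

lemma trk_None_mono: "trk w t p k = None \<Longrightarrow> k \<le> k' \<Longrightarrow> trk w t p k' = None"
proof (induction k arbitrary: t p k')
  case 0 then show ?case by simp
next
  case (Suc k)
  then obtain k'' where k': "k' = Suc k''" by (cases k') auto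
  show ?case
  proof (cases "nxt (w t) p")
    case None then show ?thesis using k' by simp
  next
    case (Some a)
    then show ?thesis using Suc k' by simp
  qed
qed

definition live :: "(nat \<Rightarrow> card) \<Rightarrow> nat \<Rightarrow> nat \<Rightarrow> bool" where
  "live w t p \<longleftrightarrow> (\<exists>k. trk w t p k = None)"

lemma live_land: assumes "live w t p"
  shows "trk w t p (Suc (land w t p)) = None" "\<And>k. k \<le> land w t p \<Longrightarrow> trk w t p k \<noteq> None"
proof -
  obtain k where k: "trk w t p k = None" using assms unfolding live_def by blast
  then obtain k' where "k = Suc k'" by (cases k) auto
  then have ex: "trk w t p (Suc k') = None" using k by simp
  show "trk w t p (Suc (land w t p)) = None" unfolding land_def by (rule LeastI[of _ k'], rule ex)
  fix j assume j: "j \<le> land w t p"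
  show "trk w t p j \<noteq> None"
  proof
    assume jn: "trk w t p j = None"
    then obtain j' where jj: "j = Suc j'" by (cases j) auto
    have "land w t p \<le> j'" unfolding land_def by (rule Least_le) (use jn jj in simp)
    then show False using j jj by simp
  qed
qed

definition isthrow :: "card \<Rightarrow> bool" where
  "isthrow c = (case c of Trivial _ \<Rightarrow> False | Throw _ _ _ \<Rightarrow> True)"

locale cwl =
  fixes b n :: nat and w :: "nat \<Rightarrow> card"
  assumes wCW: "w \<in> CW b n" and n1: "n \<ge> 1"
begin

abbreviation "Q t \<equiv> left_part (w t)"

lemma w_cards: "w t \<in> cards b" using wCW unfolding CW_def by blast
lemma w_right: "right_part (w t) = Q (Suc t)" using wCW unfolding CW_def by blast
lemma w_per: "w (t + n) = w t" using wCW unfolding CW_def by blast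

lemma Q_parts: "Q t \<in> ord_parts b" using w_cards cards_parts by blast

lemma Q_pos: "p < length (Q t) \<Longrightarrow> 0 < Q t ! p"
  using Q_parts[of t] unfolding ord_parts_def by (auto dest: nth_mem)

lemma trivial_props: "w t = Trivial q \<Longrightarrow> Q t = q \<and> Q (Suc t) = q"
  using w_right[of t] by simp

lemma throw_props:
  assumes "w t = Throw q r is"
  shows "q = Q t" "r = Q (Suc t)" "q \<noteq> []" "length is = length q - 1" "sorted_wrt (<) is"
    "\<And>j. j < length is \<Longrightarrow> 1 \<le> is ! j \<and> is ! j \<le> length r \<and> q ! (j + 1) \<le> r ! (is ! j - 1)"
proof -
  have c: "Throw q r is \<in> cards b" using w_cards[of t] assms by simp
  then have qne: "q \<noteq> []" and emb: "is \<in> embeddings q r" unfolding cards_def by auto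
  show "q = Q t" using assms by simp
  show "r = Q (Suc t)" using assms w_right[of t] by simp
  show "q \<noteq> []" by (rule qne)
  show "length is = length q - 1" "sorted_wrt (<) is" using emb qne unfolding embeddings_def by auto
  fix j assume "j < length is"
  then show "1 \<le> is ! j \<and> is ! j \<le> length r \<and> q ! (j + 1) \<le> r ! (is ! j - 1)"
    using emb qne unfolding embeddings_def by auto
qed

lemma nxt_None_iff: "nxt (w t) p = None \<longleftrightarrow> p = 0 \<and> isthrow (w t)"
  by (cases "w t") (auto simp: isthrow_def)

lemma nxt_step:
  assumes p: "p < length (Q t)" and s: "nxt (w t) p = Some p'"
  shows "p' < length (Q (Suc t)) \<and> Q t ! p \<le> Q (Suc t) ! p'"
proof (cases "w t")
  case (Trivial q)
  then show ?thesis using s p trivial_props[OF Trivial] by simp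
next
  case (Throw q r "is")
  note tp = throw_props[OF Throw]
  have p0: "p \<noteq> 0" and p': "p' = is ! (p - 1) - 1" using s Throw by (auto split: if_splits)
  have j: "p - 1 < length is" using tp(1,4) p p0 by simp
  have h: "1 \<le> is ! (p - 1)" "is ! (p - 1) \<le> length r" "q ! (p - 1 + 1) \<le> r ! (is ! (p - 1) - 1)"
    using tp(6)[OF j] by auto
  have "p' < length r" using h(1,2) p' by linarith
  moreover have "q ! p \<le> r ! p'" using h(3) p0 p' by simp
  ultimately show ?thesis using tp(1,2) by simp
qed

lemma nxt_order:
  assumes p: "p1 < p2" "p2 < length (Q t)" and s1: "nxt (w t) p1 = Some a1" and s2: "nxt (w t) p2 = Some a2"
  shows "a1 < a2"
proof (cases "w t")
  case (Trivial q)
  then show ?thesis using s1 s2 p by simp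
next
  case (Throw q r "is")
  note tp = throw_props[OF Throw]
  have p10: "p1 \<noteq> 0" and a1: "a1 = is ! (p1 - 1) - 1" using s1 Throw by (auto split: if_splits)
  have a2: "a2 = is ! (p2 - 1) - 1" using s2 Throw by (auto split: if_splits)
  have j: "p2 - 1 < length is" using tp(1,4) p p10 by simp
  have "is ! (p1 - 1) < is ! (p2 - 1)" using sorted_wrt_nth_less[OF tp(5)] j p p10 by simp
  moreover have "1 \<le> is ! (p1 - 1)" using tp(6)[of "p1 - 1"] j p by simp
  ultimately show ?thesis using a1 a2 by linarith
qed

lemma trk_bound: "p < length (Q t) \<Longrightarrow> trk w t p k = Some a \<Longrightarrow> a < length (Q (t + k))"
proof (induction k arbitrary: t p)
  case 0 then show ?case by simp
next
  case (Suc k)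
  then obtain p' where s: "nxt (w t) p = Some p'" and r: "trk w (Suc t) p' k = Some a"
    by (cases "nxt (w t) p") auto
  have "p' < length (Q (Suc t))" using nxt_step[OF Suc.prems(1) s] by simp
  then show ?case using Suc.IH[OF _ r] by simp
qed

lemma trk_per: "trk w (t + n) p k = trk w t p k"
proof (induction k arbitrary: t p)
  case 0 then show ?case by simp
next
  case (Suc k)
  have "\<forall>a. trk w (Suc (t + n)) a k = trk w (Suc t) a k" using Suc.IH[of "Suc t"] by simp
  then show ?case using w_per[of t] by (simp split: option.splits)
qed

lemma trk_order:
  "p1 < p2 \<Longrightarrow> p2 < length (Q t) \<Longrightarrow> trk w t p2 k = Some a2 \<Longrightarrow> trk w t p1 k = Some a1 \<Longrightarrow> a1 < a2"
proof (induction k arbitrary: t p1 p2)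
  case 0 then show ?case by simp
next
  case (Suc k)
  obtain b2 where s2: "nxt (w t) p2 = Some b2" and r2: "trk w (Suc t) b2 k = Some a2"
    using Suc.prems(3) by (cases "nxt (w t) p2") auto
  obtain b1 where s1: "nxt (w t) p1 = Some b1" and r1: "trk w (Suc t) b1 k = Some a1"
    using Suc.prems(4) by (cases "nxt (w t) p1") auto
  have "b1 < b2" using nxt_order[OF Suc.prems(1,2) s1 s2] .
  moreover have "b2 < length (Q (Suc t))" using nxt_step[OF Suc.prems(2) s2] by simp
  ultimately show ?case using Suc.IH r1 r2 by blast
qed

lemma live_prefix:
  assumes p: "p1 < p2" "p2 < length (Q t)" and l2: "live w t p2"
  shows "live w t p1 \<and> land w t p1 < land w t p2"
proof -
  let ?d = "land w t p2"
  have n2: "trk w t p2 (Suc ?d) = None" and a2: "trk w t p2 ?d \<noteq> None" using live_land[OF l2] by auto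
  then obtain a2 where a2: "trk w t p2 ?d = Some a2" by auto
  have "nxt (w (t + ?d)) a2 = None" using n2 a2 trk_snoc[of w t p2 ?d] by simp
  then have a20: "a2 = 0" using nxt_None_iff by simp
  have n1: "trk w t p1 ?d = None"
  proof (rule ccontr)
    assume "trk w t p1 ?d \<noteq> None"
    then obtain a1 where "trk w t p1 ?d = Some a1" by auto
    then have "a1 < a2" using trk_order[OF p a2] by simp
    then show False using a20 by simp
  qed
  then have l1: "live w t p1" unfolding live_def by blast
  obtain d' where d': "?d = Suc d'" using n1 by (cases ?d) auto
  have "trk w t p1 (Suc d') = None" using n1 d' by simp
  then have "land w t p1 \<le> d'" unfolding land_def by (rule Least_le)
  then show ?thesis using l1 d' by simp
qed

lemma land_0:
  assumes "p < length (Q t)"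
  shows "(live w t p \<and> land w t p = 0) \<longleftrightarrow> (p = 0 \<and> isthrow (w t))"
proof
  assume "live w t p \<and> land w t p = 0"
  then have "trk w t p (Suc 0) = None" using live_land(1) by fastforce
  then have "nxt (w t) p = None" by (cases "nxt (w t) p") auto
  then show "p = 0 \<and> isthrow (w t)" using nxt_None_iff by simp
next
  assume a: "p = 0 \<and> isthrow (w t)"
  then have nn: "nxt (w t) p = None" using nxt_None_iff by simp
  then have t1: "trk w t p (Suc 0) = None" by simp
  then have l: "live w t p" unfolding live_def by blast
  have "land w t p = 0" by (rule land_eq) (use t1 in auto)
  then show "live w t p \<and> land w t p = 0" using l by simp
qed

lemma land_Suc:
  assumes p: "p < length (Q t)" and l: "live w t p" and d: "land w t p = Suc d"
  shows "\<exists>p'. nxt (w t) p = Some p' \<and> p' < length (Q (Suc t)) \<and> Q t ! p \<le> Q (Suc t) ! p' \<and>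
     live w (Suc t) p' \<and> land w (Suc t) p' = d"
proof -
  have n: "trk w t p (Suc (Suc d)) = None" and a: "\<And>k. k \<le> Suc d \<Longrightarrow> trk w t p k \<noteq> None"
    using live_land[OF l] d by auto
  have "trk w t p (Suc 0) \<noteq> None" using a[of "Suc 0"] by (simp del: trk.simps)
  then obtain p' where s: "nxt (w t) p = Some p'" by (cases "nxt (w t) p") auto
  have n': "trk w (Suc t) p' (Suc d) = None" using n s by simp
  have a': "\<And>k. k \<le> d \<Longrightarrow> trk w (Suc t) p' k \<noteq> None"
  proof -
    fix k assume "k \<le> d"
    then have "trk w t p (Suc k) \<noteq> None" using a[of "Suc k"] by (simp del: trk.simps)
    then show "trk w (Suc t) p' k \<noteq> None" using s by simp
  qed
  have "live w (Suc t) p'" using n' unfolding live_def by blast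
  moreover have "land w (Suc t) p' = d" using land_eq n' a' by metis
  ultimately show ?thesis using s nxt_step[OF p s] by blast
qed

lemma idle_step:
  assumes p: "p < length (Q t)" and nl: "\<not> live w t p"
  shows "\<exists>p'. nxt (w t) p = Some p' \<and> p' < length (Q (Suc t)) \<and> Q t ! p \<le> Q (Suc t) ! p' \<and>
    \<not> live w (Suc t) p'"
proof -
  have "trk w t p (Suc 0) \<noteq> None" using nl unfolding live_def by (metis (no_types))
  then obtain p' where s: "nxt (w t) p = Some p'" by (cases "nxt (w t) p") auto
  have "\<not> live w (Suc t) p'"
  proof
    assume "live w (Suc t) p'"
    then obtain k where "trk w (Suc t) p' k = None" unfolding live_def by blast
    then have "trk w t p (Suc k) = None" using s by simp
    then show False using nl unfolding live_def by blast
  qed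
  then show ?thesis using s nxt_step[OF p s] by blast
qed

end

lemma downclosed_card:
  fixes S :: "nat set"
  assumes fin: "finite S" and dc: "\<And>x y. y \<in> S \<Longrightarrow> x < y \<Longrightarrow> x \<in> S"
  shows "S = {..<card S}"
proof (intro equalityI subsetI)
  fix x assume x: "x \<in> S"
  show "x \<in> {..<card S}"
  proof (rule ccontr)
    assume "x \<notin> {..<card S}"
    then have "card S \<le> x" by simp
    have "{..x} \<subseteq> S" using x dc by (auto simp: le_less)
    then have "card {..x} \<le> card S" using fin by (rule card_mono[rotated])
    then show False using \<open>card S \<le> x\<close> by simp
  qed
next
  fix x assume "x \<in> {..<card S}"
  then have xl: "x < card S" by simp
  show "x \<in> S"
  proof (rule ccontr)
    assume nx: "x \<notin> S"
    have "S \<subseteq> {..<x}"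
    proof
      fix y assume y: "y \<in> S"
      show "y \<in> {..<x}"
      proof (rule ccontr)
        assume "y \<notin> {..<x}"
        then have "x \<le> y" by simp
        then have "x = y \<or> x < y" by linarith
        then show False using nx y dc by blast
      qed
    qed
    then have "card S \<le> x" by (metis card_lessThan card_mono finite_lessThan)
    then show False using xl by simp
  qed
qed

context cwl
begin

definition Lv :: "nat \<Rightarrow> nat" where
  "Lv t = card {p. p < length (Q t) \<and> live w t p}"

lemma live_set: "{p. p < length (Q t) \<and> live w t p} = {..<Lv t}"
  unfolding Lv_def
proof (rule downclosed_card)
  show "finite {p. p < length (Q t) \<and> live w t p}" by simp
  fix x y assume "y \<in> {p. p < length (Q t) \<and> live w t p}" "x < y"
  then show "x \<in> {p. p < length (Q t) \<and> live w t p}" using live_prefix by auto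
qed

lemma Lv_le: "Lv t \<le> length (Q t)"
  using live_set[of t] by (metis (no_types, lifting) lessThan_iff mem_Collect_eq not_le order_refl)

lemma live_iff: "p < length (Q t) \<Longrightarrow> live w t p \<longleftrightarrow> p < Lv t"
  using live_set[of t] by blast

lemma live_lt: "p < Lv t \<Longrightarrow> live w t p \<and> p < length (Q t)"
  using live_set[of t] by blast

lemma Q_per: "Q (t + n) = Q t" using w_per by simp

lemma live_per: "live w (t + n) p = live w t p"
  unfolding live_def using trk_per by simp

lemma land_per: "land w (t + n) p = land w t p"
  by (simp only: land_def trk_per)

lemma Lv_per: "Lv (t + n) = Lv t"
  unfolding Lv_def using Q_per live_per by simp

definition sig :: "nat \<Rightarrow> nat \<Rightarrow> nat" where
  "sig t p = the (nxt (w t) p)"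

definition S :: "nat \<Rightarrow> nat" where
  "S t = (\<Sum>p\<in>{Lv t..<length (Q t)}. Q t ! p)"

lemma sig_idle:
  assumes p: "Lv t \<le> p" "p < length (Q t)"
  shows "nxt (w t) p = Some (sig t p)" "sig t p \<in> {Lv (Suc t)..<length (Q (Suc t))}"
    "Q t ! p \<le> Q (Suc t) ! sig t p"
proof -
  have nl: "\<not> live w t p" using live_iff p by simp
  obtain p' where s: "nxt (w t) p = Some p'" "p' < length (Q (Suc t))" "Q t ! p \<le> Q (Suc t) ! p'"
    "\<not> live w (Suc t) p'" using idle_step[OF p(2) nl] by blast
  have sp: "sig t p = p'" unfolding sig_def using s by simp
  show "nxt (w t) p = Some (sig t p)" using s sp by simp
  show "sig t p \<in> {Lv (Suc t)..<length (Q (Suc t))}" using s live_iff[of p' "Suc t"] sp by simp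
  show "Q t ! p \<le> Q (Suc t) ! sig t p" using s sp by simp
qed

lemma sig_mono:
  assumes "Lv t \<le> p1" "p1 < p2" "p2 < length (Q t)"
  shows "sig t p1 < sig t p2"
  using nxt_order[OF assms(2,3) sig_idle(1)[of t p1] sig_idle(1)[of t p2]] assms by simp

lemma S_step:
  shows "S t \<le> S (Suc t)"
    "S t = S (Suc t) \<Longrightarrow> sig t ` {Lv t..<length (Q t)} = {Lv (Suc t)..<length (Q (Suc t))} \<and>
       (\<forall>p\<in>{Lv t..<length (Q t)}. Q t ! p = Q (Suc t) ! sig t p)"
proof -
  let ?I = "{Lv t..<length (Q t)}" and ?I' = "{Lv (Suc t)..<length (Q (Suc t))}"
  have inj: "inj_on (sig t) ?I"
  proof (rule inj_onI)
    fix x y assume xy: "x \<in> ?I" "y \<in> ?I" "sig t x = sig t y"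
    show "x = y"
    proof (rule ccontr)
      assume "x \<noteq> y"
      then consider "x < y" | "y < x" by linarith
      then show False using sig_mono xy by (cases) (fastforce, fastforce)
    qed
  qed
  have sub: "sig t ` ?I \<subseteq> ?I'" using sig_idle(2) by auto
  have le1: "S t \<le> (\<Sum>p\<in>?I. Q (Suc t) ! sig t p)"
    unfolding S_def by (rule sum_mono) (use sig_idle(3) in auto)
  have eq2: "(\<Sum>p\<in>?I. Q (Suc t) ! sig t p) = (\<Sum>p'\<in>sig t ` ?I. Q (Suc t) ! p')"
    using sum.reindex[OF inj, of "\<lambda>p'. Q (Suc t) ! p'"] by (simp add: comp_def)
  have le3: "(\<Sum>p'\<in>sig t ` ?I. Q (Suc t) ! p') \<le> S (Suc t)"
    unfolding S_def by (rule sum_mono2) (use sub in auto)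
  show "S t \<le> S (Suc t)" using le1 eq2 le3 by linarith
  assume eq: "S t = S (Suc t)"
  have e1: "S t = (\<Sum>p\<in>?I. Q (Suc t) ! sig t p)" using le1 eq2 le3 eq by linarith
  have pw: "\<forall>p\<in>?I. Q t ! p = Q (Suc t) ! sig t p"
  proof
    fix p assume p: "p \<in> ?I"
    show "Q t ! p = Q (Suc t) ! sig t p"
      by (rule sum_mono_inv[OF e1[unfolded S_def]]) (use sig_idle(3) p in auto)
  qed
  have "sig t ` ?I = ?I'"
  proof (rule ccontr)
    assume "sig t ` ?I \<noteq> ?I'"
    then obtain x where x: "x \<in> ?I'" "x \<notin> sig t ` ?I" using sub by blast
    have "S (Suc t) = (\<Sum>p'\<in>sig t ` ?I. Q (Suc t) ! p') + (\<Sum>p'\<in>?I' - sig t ` ?I. Q (Suc t) ! p')"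
      unfolding S_def using sum.subset_diff[OF sub] by (simp add: add.commute)
    moreover have "Q (Suc t) ! x \<le> (\<Sum>p'\<in>?I' - sig t ` ?I. Q (Suc t) ! p')"
      by (rule member_le_sum) (use x in auto)
    moreover have "0 < Q (Suc t) ! x" using Q_pos x by simp
    ultimately have "(\<Sum>p'\<in>sig t ` ?I. Q (Suc t) ! p') < S (Suc t)" by linarith
    then show False using e1 eq2 eq by linarith
  qed
  then show "sig t ` ?I = ?I' \<and> (\<forall>p\<in>?I. Q t ! p = Q (Suc t) ! sig t p)" using pw by blast
qed

lemma S_per: "S (t + n) = S t"
  unfolding S_def using Q_per Lv_per by simp

lemma S_const: "S (Suc t) = S t"
proof -
  have mono: "S t' \<le> S (t' + k)" for t' k
  proof (induction k)
    case 0 then show ?case by simp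
  next
    case (Suc k) then show ?case using S_step(1)[of "t' + k"] by simp
  qed
  have "S (Suc t) \<le> S (Suc t + (n - 1))" by (rule mono)
  also have "Suc t + (n - 1) = t + n" using n1 by simp
  finally have "S (Suc t) \<le> S t" using S_per by simp
  then show ?thesis using S_step(1)[of t] by simp
qed

lemma idle_shift:
  shows "length (Q (Suc t)) - Lv (Suc t) = length (Q t) - Lv t"
    "\<And>p. Lv t \<le> p \<Longrightarrow> p < length (Q t) \<Longrightarrow> sig t p = p - Lv t + Lv (Suc t)"
    "\<And>p. Lv t \<le> p \<Longrightarrow> p < length (Q t) \<Longrightarrow> Q (Suc t) ! (p - Lv t + Lv (Suc t)) = Q t ! p"
proof -
  have st: "sig t ` {Lv t..<length (Q t)} = {Lv (Suc t)..<length (Q (Suc t))}"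
    and pw: "\<forall>p\<in>{Lv t..<length (Q t)}. Q t ! p = Q (Suc t) ! sig t p"
    using S_step(2)[OF S_const[symmetric]] by auto
  have "sorted_wrt (<) (map (sig t) [Lv t..<length (Q t)])"
    unfolding sorted_wrt_map by (rule sorted_wrt_mono_rel[of _ "(<)"]) (auto intro: sig_mono)
  moreover have "set (map (sig t) [Lv t..<length (Q t)]) = {Lv (Suc t)..<length (Q (Suc t))}"
    using st by simp
  ultimately have "sorted_list_of_set {Lv (Suc t)..<length (Q (Suc t))} = map (sig t) [Lv t..<length (Q t)]"
    by (intro sorted_list_unique) auto
  then have ml: "map (sig t) [Lv t..<length (Q t)] = [Lv (Suc t)..<length (Q (Suc t))]" by simp
  from arg_cong[OF ml, of length]
  show len: "length (Q (Suc t)) - Lv (Suc t) = length (Q t) - Lv t" by simp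
  fix p assume p: "Lv t \<le> p" "p < length (Q t)"
  have "map (sig t) [Lv t..<length (Q t)] ! (p - Lv t) = [Lv (Suc t)..<length (Q (Suc t))] ! (p - Lv t)"
    using ml by simp
  then show sg: "sig t p = p - Lv t + Lv (Suc t)" using p len by simp
  show "Q (Suc t) ! (p - Lv t + Lv (Suc t)) = Q t ! p" using pw p sg by simp
qed

definition ee :: "nat \<Rightarrow> nat list" where "ee t = drop (Lv t) (Q t)"

lemma ee_Suc: "ee (Suc t) = ee t"
proof (rule nth_equalityI)
  show "length (ee (Suc t)) = length (ee t)" unfolding ee_def using idle_shift(1)[of t] by simp
  fix j assume "j < length (ee (Suc t))"
  then have j: "j < length (Q t) - Lv t" unfolding ee_def using idle_shift(1)[of t] by simp
  have "ee (Suc t) ! j = Q (Suc t) ! (Lv (Suc t) + j)" unfolding ee_def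
    using j idle_shift(1)[of t] Lv_le[of "Suc t"] by simp
  also have "\<dots> = Q t ! (Lv t + j)" using idle_shift(3)[of t "Lv t + j"] j by (simp add: add.commute)
  also have "\<dots> = ee t ! j" unfolding ee_def using j Lv_le[of t] by simp
  finally show "ee (Suc t) ! j = ee t ! j" .
qed

lemma ee_const: "ee t = ee 0"
  by (induction t) (simp_all add: ee_Suc)

lemma nxt_idle:
  "Lv t \<le> p \<Longrightarrow> p < length (Q t) \<Longrightarrow> nxt (w t) p = Some (p - Lv t + Lv (Suc t))"
  using sig_idle(1) idle_shift(2) by simp

end

context cwl
begin

definition Kb :: nat where
  "Kb = (\<Sum>t<n. \<Sum>p<length (Q t). Suc (land w t p))"

lemma land_lt_Kb: assumes p: "p < Lv t" shows "land w t p < Kb"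
proof -
  have per1: "\<forall>t. land w (t + n) p = land w t p" using land_per by blast
  have per2: "\<forall>t. Lv (t + n) = Lv t" using Lv_per by blast
  have per3: "\<forall>t. Q (t + n) = Q t" using Q_per by blast
  let ?s = "t mod n"
  have s: "?s < n" using n1 by simp
  have e1: "land w t p = land w ?s p" using periodic_mod[OF per1] .
  have "Lv t = Lv ?s" using periodic_mod[OF per2] .
  then have ps: "p < length (Q ?s)" using p Lv_le[of ?s] by simp
  have "land w ?s p < Suc (land w ?s p)" by simp
  also have "\<dots> \<le> (\<Sum>p<length (Q ?s). Suc (land w ?s p))"
    by (rule member_le_sum) (use ps in auto)
  also have "\<dots> \<le> Kb" unfolding Kb_def by (rule member_le_sum) (use s in auto)
  finally show ?thesis using e1 by simp
qed

lemma land_inj: "p1 < p2 \<Longrightarrow> p2 < Lv t \<Longrightarrow> land w t p1 < land w t p2"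
  using live_prefix live_lt by blast

definition ll :: "nat \<Rightarrow> nat \<Rightarrow> nat" where
  "ll t d = (\<Sum>p<Lv t. if land w t p = d then Q t ! p else 0)"

lemma ll_land: assumes p: "p < Lv t" shows "ll t (land w t p) = Q t ! p"
proof -
  have "ll t (land w t p) = (\<Sum>p'<Lv t. if p' = p then Q t ! p' else 0)"
    unfolding ll_def
  proof (intro sum.cong refl)
    fix p' assume "p' \<in> {..<Lv t}"
    then have "land w t p' = land w t p \<longleftrightarrow> p' = p"
      using land_inj p by (metis lessThan_iff linorder_neqE_nat less_not_refl)
    then show "(if land w t p' = land w t p then Q t ! p' else 0) = (if p' = p then Q t ! p' else 0)" by simp
  qed
  also have "\<dots> = Q t ! p" using p by simp
  finally show ?thesis .
qed

lemma ll_zero: "(\<forall>p<Lv t. land w t p \<noteq> d) \<Longrightarrow> ll t d = 0"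
  unfolding ll_def by (intro sum.neutral) auto

lemma ll_pos: "0 < ll t d \<longleftrightarrow> (\<exists>p<Lv t. land w t p = d)"
proof
  assume "0 < ll t d" then show "\<exists>p<Lv t. land w t p = d" using ll_zero by (metis less_irrefl)
next
  assume "\<exists>p<Lv t. land w t p = d"
  then obtain p where p: "p < Lv t" "land w t p = d" by blast
  then show "0 < ll t d" using ll_land Q_pos live_lt by metis
qed

lemma ll_bnd: "bnd Kb ll"
  unfolding bnd_def
proof (intro allI impI)
  fix t d assume "Kb \<le> d"
  then show "ll t d = 0" using ll_zero land_lt_Kb by (metis not_le)
qed

lemma ll_fin: "finite {d. 0 < ll t d}"
proof -
  have "{d. 0 < ll t d} \<subseteq> {..<Kb}"
  proof
    fix d assume d: "d \<in> {d. 0 < ll t d}"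
    show "d \<in> {..<Kb}"
    proof (rule ccontr)
      assume "d \<notin> {..<Kb}"
      then have "ll t d = 0" using ll_bnd unfolding bnd_def by simp
      then show False using d by simp
    qed
  qed
  then show ?thesis by (rule finite_subset) simp
qed

lemma ll_per: "ll (t + n) = ll t"
proof (rule ext)
  fix d show "ll (t + n) d = ll t d" by (simp only: ll_def Lv_per land_per Q_per)
qed

lemma dl_ll: "dl (ll t) = map (land w t) [0..<Lv t]"
  unfolding dl_def
proof (rule sorted_list_unique)
  show "finite {d. 0 < ll t d}" by (rule ll_fin)
  show "sorted_wrt (<) (map (land w t) [0..<Lv t])"
    unfolding sorted_wrt_map by (rule sorted_wrt_mono_rel[of _ "(<)"]) (auto intro: land_inj)
  show "set (map (land w t) [0..<Lv t]) = {d. 0 < ll t d}" using ll_pos by auto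
qed

lemma length_dl_ll: "length (dl (ll t)) = Lv t"
  using dl_ll by simp

lemma sp_ll: "sp (ll t) = take (Lv t) (Q t)"
proof (rule nth_equalityI)
  show "length (sp (ll t)) = length (take (Lv t) (Q t))"
    using Lv_le[of t] by (simp add: length_sp length_dl_ll min_def)
  fix j assume "j < length (sp (ll t))"
  then have j: "j < Lv t" by (simp add: length_sp length_dl_ll)
  have "sp (ll t) ! j = ll t (land w t j)" unfolding sp_def dl_ll using j by simp
  also have "\<dots> = Q t ! j" using ll_land[OF j] .
  finally show "sp (ll t) ! j = take (Lv t) (Q t) ! j" using j by simp
qed

lemma left_decomp: "sp (ll t) @ ee 0 = Q t"
proof -
  have "ee 0 = drop (Lv t) (Q t)" using ee_const[of t] unfolding ee_def by simp
  then show ?thesis using sp_ll by simp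
qed

lemma ll_sum: "(\<Sum>d<Kb. ll t d) = sum_list (take (Lv t) (Q t))"
proof -
  have "(\<Sum>d<Kb. ll t d) = (\<Sum>p<Lv t. \<Sum>d<Kb. if land w t p = d then Q t ! p else 0)"
    unfolding ll_def by (rule sum.swap)
  also have "\<dots> = (\<Sum>p<Lv t. Q t ! p)"
    by (intro sum.cong refl) (use land_lt_Kb in auto)
  also have "\<dots> = sum_list (take (Lv t) (Q t))"
    using Lv_le[of t] by (simp add: sum_list_sum_nth atLeast0LessThan min_def)
  finally show ?thesis .
qed

definition i0 :: nat where "i0 = b - sum_list (ee 0)"

lemma ll_sum_i0: "(\<Sum>d<Kb. ll t d) = i0"
proof -
  have "sum_list (Q t) = b" using Q_parts[of t] unfolding ord_parts_def by simp
  moreover have "sum_list (Q t) = sum_list (take (Lv t) (Q t)) + sum_list (ee 0)"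
    using ee_const[of t] unfolding ee_def by (metis append_take_drop_id sum_list_append)
  ultimately show ?thesis unfolding i0_def using ll_sum by simp
qed

lemma i0_le: "i0 \<le> b" unfolding i0_def by simp

lemma ee_parts: "ee 0 \<in> ord_parts (b - i0)"
proof -
  have "sum_list (Q 0) = b" using Q_parts[of 0] unfolding ord_parts_def by simp
  then have "sum_list (ee 0) \<le> b" unfolding ee_def by (metis append_take_drop_id le_add2 sum_list_append)
  then have "sum_list (ee 0) = b - i0" unfolding i0_def by simp
  moreover have "\<forall>x\<in>set (ee 0). 0 < x" using Q_parts[of 0] unfolding ee_def ord_parts_def
    by (auto dest: in_set_dropD)
  ultimately show ?thesis unfolding ord_parts_def by simp
qed

lemma ll_ineq: "ll t (Suc d) \<le> ll (Suc t) d"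
proof (cases "0 < ll t (Suc d)")
  case False then show ?thesis by simp
next
  case True
  then obtain p where p: "p < Lv t" "land w t p = Suc d" using ll_pos by blast
  have lp: "live w t p" "p < length (Q t)" using live_lt[OF p(1)] by auto
  obtain p' where p': "p' < length (Q (Suc t))" "Q t ! p \<le> Q (Suc t) ! p'" "live w (Suc t) p'"
    "land w (Suc t) p' = d" using land_Suc[OF lp(2) lp(1) p(2)] by blast
  have pl: "p' < Lv (Suc t)" using live_iff p'(1,3) by simp
  have "ll t (Suc d) = Q t ! p" using ll_land[OF p(1)] p(2) by simp
  also have "\<dots> \<le> Q (Suc t) ! p'" by (rule p'(2))
  also have "\<dots> = ll (Suc t) d" using ll_land[OF pl] p'(4) by simp
  finally show ?thesis .
qed

lemma ll_throw: "0 < ll t 0 \<longleftrightarrow> isthrow (w t)"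
proof
  assume "0 < ll t 0"
  then obtain p where p: "p < Lv t" "land w t p = 0" using ll_pos by blast
  then show "isthrow (w t)" using land_0 live_lt by blast
next
  assume th: "isthrow (w t)"
  then obtain q r "is" where wt: "w t = Throw q r is" by (cases "w t") (auto simp: isthrow_def)
  have "q \<noteq> []" "q = Q t" using throw_props[OF wt] by auto
  then have q0: "0 < length (Q t)" by simp
  then have "live w t 0 \<and> land w t 0 = 0" using land_0 th by blast
  then have "0 < Lv t" using live_iff q0 by simp
  then show "0 < ll t 0" using ll_pos \<open>live w t 0 \<and> land w t 0 = 0\<close> by blast
qed

lemma ll_trivial:
  assumes z: "ll t 0 = 0" shows "ll (Suc t) d = ll t (Suc d)"
proof -
  have nt: "\<not> isthrow (w t)" using ll_throw[of t] z by (metis less_irrefl)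
  then obtain q where wt: "w t = Trivial q" by (cases "w t") (auto simp: isthrow_def)
  have QQ: "Q (Suc t) = Q t" using trivial_props[OF wt] by simp
  have lv: "live w (Suc t) p \<longleftrightarrow> live w t p" for p
  proof
    assume "live w (Suc t) p"
    then obtain k where "trk w (Suc t) p k = None" unfolding live_def by blast
    then have "trk w t p (Suc k) = None" using wt by simp
    then show "live w t p" unfolding live_def by blast
  next
    assume "live w t p"
    then obtain k where k: "trk w t p k = None" unfolding live_def by blast
    then obtain k' where "k = Suc k'" by (cases k) auto
    then have "trk w (Suc t) p k' = None" using k wt by simp
    then show "live w (Suc t) p" unfolding live_def by blast
  qed
  have LL: "Lv (Suc t) = Lv t" unfolding Lv_def using QQ lv by simp
  have ld: "land w (Suc t) p = land w t p - 1 \<and> 1 \<le> land w t p" if p: "p < Lv t" for p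
  proof -
    have lp: "live w t p" "p < length (Q t)" using live_lt[OF p] by auto
    have "land w t p \<noteq> 0" using land_0[OF lp(2)] nt lp(1) by simp
    then obtain d' where d': "land w t p = Suc d'" by (cases "land w t p") auto
    obtain p' where "nxt (w t) p = Some p'" "land w (Suc t) p' = d'"
      using land_Suc[OF lp(2) lp(1) d'] by blast
    then show ?thesis using wt d' by simp
  qed
  show ?thesis unfolding ll_def LL
  proof (intro sum.cong refl)
    fix p assume "p \<in> {..<Lv t}"
    then have p: "p < Lv t" by simp
    show "(if land w (Suc t) p = d then Q (Suc t) ! p else 0) = (if land w t p = Suc d then Q t ! p else 0)"
      using ld[OF p] QQ by auto
  qed
qed

lemma ll_pair_ok: "pair_ok (ll t) (ll (Suc t))"
  unfolding pair_ok_def using ll_fin ll_ineq ll_trivial by blast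

definition mm :: "nat \<Rightarrow> nat multiset" where
  "mm t = (\<Sum>d<Kb. replicate_mset (ll (Suc t) d - ll t (Suc d)) (Suc d))"

lemma count_mm: "count (mm t) h = (if h = 0 then 0 else if h - 1 < Kb then ll (Suc t) (h - 1) - ll t h else 0)"
proof -
  have "count (mm t) h = (\<Sum>d<Kb. if Suc d = h then ll (Suc t) d - ll t (Suc d) else 0)"
    unfolding mm_def count_sum by (intro sum.cong refl) simp
  also have "\<dots> = (\<Sum>d<Kb. if d = h - 1 \<and> h \<noteq> 0 then ll (Suc t) (h - 1) - ll t h else 0)"
    by (intro sum.cong refl) auto
  also have "\<dots> = (if h = 0 then 0 else if h - 1 < Kb then ll (Suc t) (h - 1) - ll t h else 0)"
    by (cases "h = 0") (simp_all add: sum.delta)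
  finally show ?thesis .
qed

lemma ll_gwalk: "gwalk n ll mm"
proof -
  have rec: "ll (Suc t) d = ll t (Suc d) + count (mm t) (Suc d)" for t d
  proof (cases "d < Kb")
    case True then show ?thesis using count_mm[of t "Suc d"] ll_ineq[of t d] by simp
  next
    case False
    then have "ll (Suc t) d = 0" "ll t (Suc d) = 0" using ll_bnd unfolding bnd_def by auto
    then show ?thesis using count_mm[of t "Suc d"] False by simp
  qed
  have pos: "0 \<notin># mm t" for t using count_mm[of t 0] by (simp add: not_in_iff)
  have gp: "gpre n ll mm" unfolding gpre_def using rec ll_per pos by blast
  have sz: "ll t 0 = size (mm t)" for t
  proof -
    have "size (mm t) = (\<Sum>d<Kb. ll (Suc t) d - ll t (Suc d))" unfolding mm_def by simp
    also have "\<dots> = (\<Sum>d<Kb. ll (Suc t) d) - (\<Sum>d<Kb. ll t (Suc d))"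
      by (rule sum_subtractf_nat) (use ll_ineq in auto)
    also have "(\<Sum>d<Kb. ll t (Suc d)) + ll t 0 = (\<Sum>d<Kb. ll t d)"
    proof -
      have "(\<Sum>d<Kb. ll t (Suc d)) + ll t 0 = (\<Sum>d<Suc Kb. ll t d)" unfolding sum.lessThan_Suc_shift by simp
      also have "\<dots> = (\<Sum>d<Kb. ll t d)" using bndD[OF ll_bnd, of t] by simp
      finally show ?thesis .
    qed
    then have "(\<Sum>d<Kb. ll (Suc t) d) - (\<Sum>d<Kb. ll t (Suc d)) = ll t 0"
      using ll_sum_i0[of t] ll_sum_i0[of "Suc t"] by linarith
    finally show ?thesis by simp
  qed
  have mper: "mm (t + n) = mm t" for t
    unfolding mm_def using ll_per[of t] ll_per[of "Suc t"] by simp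
  show ?thesis unfolding gwalk_def using gp sz mper ll_bnd by blast
qed

lemma ll_cwalk: "cwalk w ll (ee 0)"
  unfolding cwalk_def
proof (intro conjI allI)
  fix t
  show "pair_ok (ll t) (ll (Suc t))" by (rule ll_pair_ok)
  show "w t = cardof (ll t) (ll (Suc t)) (ee 0)"
  proof (cases "w t")
    case (Trivial q)
    then have "\<not> isthrow (w t)" by (simp add: isthrow_def)
    then have "ll t 0 = 0" using ll_throw[of t] by simp
    then show ?thesis unfolding cardof_def using Trivial left_decomp[of t] by simp
  next
    case (Throw q r "is")
    note tp = throw_props[OF Throw]
    have pos: "ll t 0 \<noteq> 0" using ll_throw Throw by (simp add: isthrow_def)
    have lee: "length (ee 0) = length (Q t) - Lv t"
    proof -
      have "ee 0 = ee t" by (rule ee_const[symmetric])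
      moreover have "length (ee t) = length (Q t) - Lv t" by (simp add: ee_def)
      ultimately show ?thesis by simp
    qed
    have isq: "is = map (ixf (ll t) (ll (Suc t)) (ee 0)) [1..<length (dl (ll t)) + length (ee 0)]"
    proof (rule nth_equalityI)
      show "length is = length (map (ixf (ll t) (ll (Suc t)) (ee 0)) [1..<length (dl (ll t)) + length (ee 0)])"
        using tp(1,4) lee Lv_le[of t] by (simp add: length_dl_ll)
      fix j assume j: "j < length is"
      let ?p = "Suc j"
      have pq: "?p < length (Q t)" using j tp(1,4) by simp
      have isj1: "1 \<le> is ! j" using tp(6)[OF j] by simp
      have nx: "nxt (w t) ?p = Some (is ! j - 1)" using Throw by simp
      have rhs: "map (ixf (ll t) (ll (Suc t)) (ee 0)) [1..<length (dl (ll t)) + length (ee 0)] ! j =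
                 ixf (ll t) (ll (Suc t)) (ee 0) ?p"
        using j tp(1,4) lee Lv_le[of t] by (simp add: length_dl_ll)
      have "is ! j = ixf (ll t) (ll (Suc t)) (ee 0) ?p"
      proof (cases "?p < Lv t")
        case True
        have lp: "live w t ?p" using live_lt[OF True] by simp
        have "land w t ?p \<noteq> 0" using land_0[OF pq] lp by simp
        then obtain d where d: "land w t ?p = Suc d" by (cases "land w t ?p") auto
        obtain p' where p': "nxt (w t) ?p = Some p'" "p' < length (Q (Suc t))" "live w (Suc t) p'"
          "land w (Suc t) p' = d" using land_Suc[OF pq lp d] by blast
        have p'l: "p' < Lv (Suc t)" using live_iff p'(2,3) by simp
        have "dl (ll (Suc t)) ! p' = d" using p'l p'(4) by (simp add: dl_ll)
        then have rk: "rank (ll (Suc t)) d = p'"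
          using rank_nth[OF ll_fin, of p' "Suc t"] p'l by (simp add: length_dl_ll)
        have "dl (ll t) ! ?p = Suc d" using True d by (simp add: dl_ll)
        then have "ixf (ll t) (ll (Suc t)) (ee 0) ?p = Suc p'"
          unfolding ixf_def using True rk by (simp add: length_dl_ll)
        moreover have "is ! j - 1 = p'" using nx p'(1) by simp
        ultimately show ?thesis using isj1 by simp
      next
        case False
        have "nxt (w t) ?p = Some (?p - Lv t + Lv (Suc t))" using nxt_idle False pq by simp
        then have "is ! j - 1 = ?p - Lv t + Lv (Suc t)" using nx by simp
        moreover have "ixf (ll t) (ll (Suc t)) (ee 0) ?p = ?p - Lv t + Lv (Suc t) + 1"
          unfolding ixf_def using False by (simp add: length_dl_ll)
        ultimately show ?thesis using isj1 by simp
      qed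
      then show "is ! j = map (ixf (ll t) (ll (Suc t)) (ee 0)) [1..<length (dl (ll t)) + length (ee 0)] ! j"
        using rhs by simp
    qed
    have "q = sp (ll t) @ ee 0" using tp(1) left_decomp by simp
    moreover have "r = sp (ll (Suc t)) @ ee 0" using tp(2) left_decomp by simp
    ultimately show ?thesis unfolding cardof_def using Throw pos isq by simp
  qed
qed

lemma surj_data:
  "\<exists>l m e i. gwalk n l m \<and> bnd Kb l \<and> cwalk w l e \<and> i = (\<Sum>d<Kb. l 0 d) \<and> i \<le> b \<and>
     e \<in> ord_parts (b - i)"
  by (rule exI[of _ ll], rule exI[of _ mm], rule exI[of _ "ee 0"], rule exI[of _ i0])
    (simp add: ll_gwalk ll_bnd ll_cwalk ll_sum_i0 i0_le ee_parts)

end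

lemma gwalk_pair_ok:
  assumes g: "gwalk n l m" and b: "bnd K l"
  shows "pair_ok (l t) (l (Suc t))"
proof -
  have rec: "\<And>t d. l (Suc t) d = l t (Suc d) + count (m t) (Suc d)"
    and sz: "\<And>t. l t 0 = size (m t)" using g unfolding gwalk_def gpre_def by auto
  have fin: "finite {d. 0 < l t' d}" for t'
  proof -
    have "{d. 0 < l t' d} \<subseteq> {..<K}"
    proof
      fix d assume d: "d \<in> {d. 0 < l t' d}"
      show "d \<in> {..<K}"
      proof (rule ccontr)
        assume "d \<notin> {..<K}"
        then have "l t' d = 0" using b unfolding bnd_def by simp
        then show False using d by simp
      qed
    qed
    then show ?thesis by (rule finite_subset) simp
  qed
  have "l t (Suc d) \<le> l (Suc t) d" for d using rec[of t d] by simp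
  moreover have "l t 0 = 0 \<Longrightarrow> l (Suc t) d = l t (Suc d)" for d
    using rec[of t d] sz[of t] by simp
  ultimately show ?thesis unfolding pair_ok_def using fin by blast
qed

definition Phi :: "nat \<Rightarrow> (nat \<Rightarrow> nat multiset) \<Rightarrow> nat list \<Rightarrow> nat \<Rightarrow> card" where
  "Phi n M e t = cardof (lM n M t) (lM n M (Suc t)) e"

definition SSi :: "nat \<Rightarrow> nat \<Rightarrow> (nat \<Rightarrow> nat multiset) set" where
  "SSi n i = {M \<in> multiplex_siteswaps n. num_balls n M = real i}"

definition PAIRS :: "nat \<Rightarrow> nat \<Rightarrow> ((nat \<Rightarrow> nat multiset) \<times> nat list) set" where
  "PAIRS b n = (\<Union>i\<in>{..b}. SSi n i \<times> ord_parts (b - i))"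

lemma Phi_cwalk:
  assumes n: "n \<ge> 1" and M: "M \<in> multiplex_siteswaps n"
  shows "cwalk (Phi n M e) (lM n M) e"
  unfolding cwalk_def Phi_def using gwalk_pair_ok[OF ss_gwalk[OF n M] ss_gpre(2)[OF n M]] by blast

lemma Phi_in:
  assumes n: "n \<ge> 1" and P: "(M, e) \<in> PAIRS b n"
  shows "Phi n M e \<in> CW b n"
proof -
  obtain i where i: "i \<le> b" "M \<in> multiplex_siteswaps n" "num_balls n M = real i" "e \<in> ord_parts (b - i)"
    using P unfolding PAIRS_def SSi_def by auto
  let ?K = "n * Hs n M"
  note g = ss_gwalk[OF n i(2)] and bd = ss_gpre(2)[OF n i(2)]
  have gp: "gpre n (lM n M) (mp n M)" and sz: "\<And>t. lM n M t 0 = size (mp n M t)"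
    using g unfolding gwalk_def by auto
  have bal: "(\<Sum>d<?K. lM n M 0 d) = i" using ss_balls[OF n i(2) bd] i(3) by (metis of_nat_eq_iff)
  have sumt: "sum_list (sp (lM n M t)) = i" for t
  proof -
    have fin: "finite {d. 0 < lM n M t d}"
      using gwalk_pair_ok[OF g bd, of t] unfolding pair_ok_def by blast
    have "sum_list (sp (lM n M t)) = (\<Sum>d<?K. lM n M t d)"
      by (rule sum_sp[OF fin]) (use bd in \<open>simp add: bnd_def\<close>)
    also have "\<dots> = (\<Sum>d<?K. lM n M 0 d)" using gwalk_weight(2)[OF gp sz bd] by blast
    finally show ?thesis using bal by simp
  qed
  have ok: "\<And>t. pair_ok (lM n M t) (lM n M (Suc t))" using gwalk_pair_ok[OF g bd] by blast
  have "\<forall>t. Phi n M e t \<in> cards b"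
    unfolding Phi_def using cardof_cards[OF ok sumt sumt i(4) i(1)] by blast
  moreover have "\<forall>t. right_part (Phi n M e t) = left_part (Phi n M e (Suc t))"
    unfolding Phi_def using right_cardof[OF ok] left_cardof by simp
  moreover have "\<forall>t. Phi n M e (t + n) = Phi n M e t"
  proof
    fix t
    have "lM n M (t + n) = lM n M t" "lM n M (Suc t + n) = lM n M (Suc t)"
      using gp unfolding gpre_def by blast+
    then show "Phi n M e (t + n) = Phi n M e t" unfolding Phi_def by simp
  qed
  ultimately show ?thesis unfolding CW_def by blast
qed

lemma Phi_inj:
  assumes n: "n \<ge> 1"
  shows "inj_on (\<lambda>(M, e). Phi n M e) (PAIRS b n)"
proof (rule inj_onI)
  fix x y assume x: "x \<in> PAIRS b n" and y: "y \<in> PAIRS b n"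
    and eq: "(\<lambda>(M, e). Phi n M e) x = (\<lambda>(M, e). Phi n M e) y"
  obtain M e where xe: "x = (M, e)" by (cases x)
  obtain M' e' where ye: "y = (M', e')" by (cases y)
  have M: "M \<in> multiplex_siteswaps n" and M': "M' \<in> multiplex_siteswaps n"
    using x y xe ye unfolding PAIRS_def SSi_def by auto
  have w: "Phi n M e = Phi n M' e'" using eq xe ye by simp
  have c1: "cwalk (Phi n M e) (lM n M) e" by (rule Phi_cwalk[OF n M])
  have c2: "cwalk (Phi n M e) (lM n M') e'" using Phi_cwalk[OF n M'] w by simp
  have le: "lM n M = lM n M'" and ee: "e = e'" using cwalk_inj[OF c1 c2] by auto
  have "gpre n (lM n M) (mp n M)" "gpre n (lM n M) (mp n M')"
    using ss_gpre(1)[OF n M] ss_gpre(1)[OF n M'] le by auto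
  then have "mp n M = mp n M'" by (rule gpre_m_unique)
  then have "M = M'" using mp_inj[OF M M'] by simp
  then show "x = y" using xe ye ee by simp
qed

lemma Phi_surj:
  assumes n: "n \<ge> 1" and w: "w \<in> CW b n"
  shows "w \<in> (\<lambda>(M, e). Phi n M e) ` PAIRS b n"
proof -
  interpret cwl b n w using w n by unfold_locales
  obtain l m e i where g: "gwalk n l m" and bl: "bnd Kb l" and cw: "cwalk w l e"
    and i: "i = (\<Sum>d<Kb. l 0 d)" "i \<le> b" "e \<in> ord_parts (b - i)"
    using surj_data by blast
  define M where "M = (\<lambda>t. if t < n then m t else {#})"
  have M: "M \<in> multiplex_siteswaps n" and mpM: "mp n M = m" and nb: "num_balls n M = real i"
    using gwalk_restrict[OF n g bl] i(1) unfolding M_def by auto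
  let ?K = "max Kb (n * Hs n M)"
  have "lM n M = l"
  proof (rule gpre_unique[OF n])
    show "gpre n (lM n M) m" using ss_gpre(1)[OF n M] mpM by simp
    show "gpre n l m" using g unfolding gwalk_def by blast
    show "bnd ?K (lM n M)" using ss_gpre(2)[OF n M] by (rule bnd_mono) simp
    show "bnd ?K l" using bl by (rule bnd_mono) simp
  qed
  then have "Phi n M e = w" unfolding Phi_def using cw unfolding cwalk_def by auto
  moreover have "(M, e) \<in> PAIRS b n"
  proof -
    have "M \<in> SSi n i" unfolding SSi_def using M nb by simp
    then show ?thesis unfolding PAIRS_def using i(2,3) by blast
  qed
  ultimately show ?thesis by force
qed

lemma finite_CW: assumes n: "n \<ge> 1" shows "finite (CW b n)"
proof -
  have "CW b n \<subseteq> (\<lambda>cs t. cs ! (t mod n)) ` {cs. set cs \<subseteq> cards b \<and> length cs = n}"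
  proof
    fix w assume w: "w \<in> CW b n"
    have wc: "\<And>t. w t \<in> cards b" and wp: "\<forall>t. w (t + n) = w t" using w unfolding CW_def by auto
    have "w = (\<lambda>t. map w [0..<n] ! (t mod n))"
    proof
      fix t show "w t = map w [0..<n] ! (t mod n)" using periodic_mod[OF wp, of t] n by simp
    qed
    moreover have "map w [0..<n] \<in> {cs. set cs \<subseteq> cards b \<and> length cs = n}" using wc by auto
    ultimately show "w \<in> (\<lambda>cs t. cs ! (t mod n)) ` {cs. set cs \<subseteq> cards b \<and> length cs = n}" by blast
  qed
  moreover have "finite {cs. set cs \<subseteq> cards b \<and> length cs = n}"
    by (rule finite_lists_length_eq) (rule finite_cards)
  ultimately show ?thesis by (meson finite_imageI finite_subset)
qed

lemma card_CW:
  assumes n: "n \<ge> 1"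
  shows "card (CW b n) = (\<Sum>i\<le>b. ss i n * C (b - i))"
proof -
  have bij: "bij_betw (\<lambda>(M, e). Phi n M e) (PAIRS b n) (CW b n)"
    unfolding bij_betw_def
  proof
    show "inj_on (\<lambda>(M, e). Phi n M e) (PAIRS b n)" by (rule Phi_inj[OF n])
    show "(\<lambda>(M, e). Phi n M e) ` PAIRS b n = CW b n"
      using Phi_in[OF n] Phi_surj[OF n] by auto
  qed
  then have cc: "card (PAIRS b n) = card (CW b n)" by (rule bij_betw_same_card)
  have finP: "finite (PAIRS b n)" using bij finite_CW[OF n] bij_betw_finite by blast
  have finS: "finite (SSi n i)" if "i \<le> b" for i
  proof -
    have "SSi n i \<times> ord_parts (b - i) \<subseteq> PAIRS b n" unfolding PAIRS_def using that by blast
    then have "finite (SSi n i \<times> ord_parts (b - i))" using finP by (rule finite_subset)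
    moreover have "ord_parts (b - i) \<noteq> {}"
    proof
      assume "ord_parts (b - i) = {}"
      then have "C (b - i) = 0" using ord_parts_finite_card[of "b - i"] by simp
      then show False by (simp add: C_def split: if_splits)
    qed
    ultimately show ?thesis by (auto simp add: finite_cartesian_product_iff)
  qed
  have "card (PAIRS b n) = (\<Sum>i\<le>b. card (SSi n i \<times> ord_parts (b - i)))"
    unfolding PAIRS_def
  proof (rule card_UN_disjoint)
    show "finite {..b}" by simp
    show "\<forall>i\<in>{..b}. finite (SSi n i \<times> ord_parts (b - i))" using finS finite_ord_parts by auto
    show "\<forall>i\<in>{..b}. \<forall>j\<in>{..b}. i \<noteq> j \<longrightarrow> SSi n i \<times> ord_parts (b - i) \<inter> SSi n j \<times> ord_parts (b - j) = {}"
      unfolding SSi_def by auto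
  qed
  also have "\<dots> = (\<Sum>i\<le>b. ss i n * C (b - i))"
  proof (intro sum.cong refl)
    fix i assume "i \<in> {..b}"
    show "card (SSi n i \<times> ord_parts (b - i)) = ss i n * C (b - i)"
      unfolding card_cartesian_product ss_def SSi_def using ord_parts_finite_card by simp
  qed
  finally show ?thesis using cc by simp
qed

lemma C_Suc: "m \<ge> 1 \<Longrightarrow> C (Suc m) = 2 * C m"
  unfolding C_def by (cases m) auto

lemma telescope:
  fixes s :: "nat \<Rightarrow> nat"
  shows "(\<Sum>i<b. \<Sum>j\<le>i. s j * C (i - j)) = (\<Sum>j<b. s j * C (b - j))"
proof (induction b)
  case 0 then show ?case by simp
next
  case (Suc b)
  have "(\<Sum>i<Suc b. \<Sum>j\<le>i. s j * C (i - j)) = (\<Sum>j<b. s j * C (b - j)) + (\<Sum>j\<le>b. s j * C (b - j))"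
    using Suc by simp
  also have "\<dots> = (\<Sum>j<b. 2 * (s j * C (b - j))) + s b * C 0"
    by (simp add: lessThan_Suc_atMost[symmetric] sum.distrib[symmetric] mult_2)
  also have "\<dots> = (\<Sum>j<b. s j * C (Suc b - j)) + s b * C (Suc b - b)"
  proof -
    have "(\<Sum>j<b. 2 * (s j * C (b - j))) = (\<Sum>j<b. s j * C (Suc b - j))"
    proof (intro sum.cong refl)
      fix j assume "j \<in> {..<b}"
      then have "Suc b - j = Suc (b - j)" "b - j \<ge> 1" by auto
      then show "2 * (s j * C (b - j)) = s j * C (Suc b - j)" using C_Suc by simp
    qed
    moreover have "C 0 = C (Suc b - b)" by (simp add: C_def)
    ultimately show ?thesis by simp
  qed
  also have "\<dots> = (\<Sum>j<Suc b. s j * C (Suc b - j))" by simp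
  finally show ?case .
qed

theorem theorem7:
  fixes b n :: nat
  assumes "n \<ge> 1"
  shows "int (ss b n) = mat_trace (A_mat b ^\<^sub>m n) - (\<Sum>i<b. mat_trace (A_mat i ^\<^sub>m n))"
proof -
  have T: "mat_trace (A_mat i ^\<^sub>m n) = int (\<Sum>j\<le>i. ss j n * C (i - j))" for i
    using trace_W[of i n] sum_W_CW[OF assms, of i] card_CW[OF assms, of i] by simp
  have "(\<Sum>i<b. mat_trace (A_mat i ^\<^sub>m n)) = int (\<Sum>i<b. \<Sum>j\<le>i. ss j n * C (i - j))"
    using T by simp
  also have "\<dots> = int (\<Sum>j<b. ss j n * C (b - j))" using telescope[of "\<lambda>j. ss j n" b] by simp
  finally have S: "(\<Sum>i<b. mat_trace (A_mat i ^\<^sub>m n)) = int (\<Sum>j<b. ss j n * C (b - j))" .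
  have "mat_trace (A_mat b ^\<^sub>m n) = int (\<Sum>j<b. ss j n * C (b - j)) + int (ss b n)"
    using T[of b] by (simp add: lessThan_Suc_atMost[symmetric] C_def)
  then show ?thesis using S by simp
qed

end
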